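(* Consider the variant of Sinkless Orientation on graphs of constant maximum degree in which every node of degree at least $3$ must have at least one outgoing edge. Its randomized $\mathsf{LCA}$ probe complexity and its randomized $\mathsf{VOLUME}$ probe complexity are $O(\log n \log^* n)$.
   Context: Sinkless Orientation: orient every edge of the input graph; here the requirement is that every vertex of degree at least $3$ has at least one outgoing edge. $\mathsf{LCA}$ model: unique IDs from $[n]$, port numbering, local inputs; the algorithm answers queries about the output of a node/edge using probes of the form (ID $i\in[n]$, port), each returning the local information of the corresponding neighbor; answers depend only on the input and a shared random string (stateless); complexity is the max number of probes; the combined output must be valid with probability at least $1-1/n^{c}$ for any desired constant $c$. $\mathsf{VOLUME}$ model: like $\mathsf{LCA}$, but IDs are from $\{1,\dots,\mathrm{poly}(n)\}$, the algorithm may only probe neighbors of already discovered nodes (a connected region around the queried node), and randomness is private per node rather than shared. *)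

theory Defs
  imports "HOL-Probability.Product_PMF"
begin

text \<open>A port-numbered simple graph on the (finite) vertex/ID set V: node v has ports
  0 ..< deg v; port p of v leads to nb v p = (u, q), meaning that the edge is attached to
  port q of neighbour u.\<close>

definition port_graph :: "nat set \<Rightarrow> (nat \<Rightarrow> nat) \<Rightarrow> (nat \<Rightarrow> nat \<Rightarrow> nat \<times> nat) \<Rightarrow> bool" where
  "port_graph V deg nb \<longleftrightarrow> finite V \<and>
     (\<forall>v\<in>V. \<forall>p<deg v. fst (nb v p) \<in> V \<and> fst (nb v p) \<noteq> v \<and> snd (nb v p) < deg (fst (nb v p))
                        \<and> nb (fst (nb v p)) (snd (nb v p)) = (v, p)) \<and>
     (\<forall>v\<in>V. inj_on (\<lambda>p. fst (nb v p)) {..<deg v})"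

definition max_degree_le :: "nat set \<Rightarrow> (nat \<Rightarrow> nat) \<Rightarrow> nat \<Rightarrow> bool" where
  "max_degree_le V deg D \<longleftrightarrow> (\<forall>v\<in>V. deg v \<le> D)"

text \<open>An orientation is given by half-edge bits: out v p = True means the edge at port p
  of v is oriented away from v.  The two half-edges of each edge must disagree.\<close>

definition sinkless_orientation ::
  "nat set \<Rightarrow> (nat \<Rightarrow> nat) \<Rightarrow> (nat \<Rightarrow> nat \<Rightarrow> nat \<times> nat) \<Rightarrow> (nat \<Rightarrow> nat \<Rightarrow> bool) \<Rightarrow> bool" where
  "sinkless_orientation V deg nb out \<longleftrightarrow>
     (\<forall>v\<in>V. \<forall>p<deg v. out v p \<noteq> out (fst (nb v p)) (snd (nb v p))) \<and>
     (\<forall>v\<in>V. 3 \<le> deg v \<longrightarrow> (\<exists>p<deg v. out v p))"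

text \<open>A probe (i, p) asks for the neighbour of node i behind port i's port p; the answer is
  None if the probe is invalid, otherwise the local information of that neighbour.\<close>

datatype 'i ptree = Done bool | Probe nat nat "'i option \<Rightarrow> 'i ptree"

text \<open>Local information returned by an LCA probe: (ID of neighbour, its degree, back port).\<close>

definition lca_probe :: "nat set \<Rightarrow> (nat \<Rightarrow> nat) \<Rightarrow> (nat \<Rightarrow> nat \<Rightarrow> nat \<times> nat) \<Rightarrow>
    nat \<Rightarrow> nat \<Rightarrow> (nat \<times> nat \<times> nat) option" where
  "lca_probe V deg nb i p =
     (if i \<in> V \<and> p < deg i then Some (fst (nb i p), deg (fst (nb i p)), snd (nb i p)) else None)"

primrec lca_run :: "nat set \<Rightarrow> (nat \<Rightarrow> nat) \<Rightarrow> (nat \<Rightarrow> nat \<Rightarrow> nat \<times> nat) \<Rightarrow>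
    (nat \<times> nat \<times> nat) ptree \<Rightarrow> bool \<times> nat" where
  "lca_run V deg nb (Done b) = (b, 0)"
| "lca_run V deg nb (Probe i p k) =
     (let r = lca_run V deg nb (k (lca_probe V deg nb i p)) in (fst r, Suc (snd r)))"

text \<open>An LCA algorithm: given n, the shared random string and a query (v, p) (the edge at
  port p of node v), it produces a decision tree.  Answers depend only on input and the
  shared randomness (stateless).\<close>

type_synonym lca_alg = "nat \<Rightarrow> bool list \<Rightarrow> nat \<Rightarrow> nat \<Rightarrow> (nat \<times> nat \<times> nat) ptree"

definition random_strings :: "nat \<Rightarrow> bool list pmf" where
  "random_strings k = pmf_of_set {xs. length xs = k}"

definition lca_complexity_success ::
  "nat \<Rightarrow> real \<Rightarrow> (nat \<Rightarrow> real) \<Rightarrow> (nat \<Rightarrow> nat) \<Rightarrow> lca_alg \<Rightarrow> bool" where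
  "lca_complexity_success \<Delta> c T m A \<longleftrightarrow>
     (\<forall>n\<ge>2. \<forall>deg nb. port_graph {1..n} deg nb \<and> max_degree_le {1..n} deg \<Delta> \<longrightarrow>
        (\<forall>\<rho>. length \<rho> = m n \<longrightarrow> (\<forall>v\<in>{1..n}. \<forall>p<deg v.
             real (snd (lca_run {1..n} deg nb (A n \<rho> v p))) \<le> T n)) \<and>
        measure_pmf.prob (random_strings (m n))
          {\<rho>. sinkless_orientation {1..n} deg nb (\<lambda>v p. fst (lca_run {1..n} deg nb (A n \<rho> v p)))}
          \<ge> 1 - 1 / real n powr c)"

text \<open>Local information returned by a VOLUME probe: (ID of neighbour, its degree, back port,
  its private random string).\<close>

definition vol_probe :: "nat set \<Rightarrow> (nat \<Rightarrow> nat) \<Rightarrow> (nat \<Rightarrow> nat \<Rightarrow> nat \<times> nat) \<Rightarrow> (nat \<Rightarrow> bool list) \<Rightarrow>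
    nat \<Rightarrow> nat \<Rightarrow> (nat \<times> nat \<times> nat \<times> bool list) option" where
  "vol_probe V deg nb r i p =
     (if i \<in> V \<and> p < deg i
      then Some (fst (nb i p), deg (fst (nb i p)), snd (nb i p), r (fst (nb i p))) else None)"

text \<open>Running with a set of discovered nodes: probes at undiscovered nodes return None
  (so they give no information); answers of valid probes add the neighbour to the
  discovered set.\<close>

primrec vol_run :: "nat set \<Rightarrow> (nat \<Rightarrow> nat) \<Rightarrow> (nat \<Rightarrow> nat \<Rightarrow> nat \<times> nat) \<Rightarrow> (nat \<Rightarrow> bool list) \<Rightarrow>
    (nat \<times> nat \<times> nat \<times> bool list) ptree \<Rightarrow> nat set \<Rightarrow> bool \<times> nat" where
  "vol_run V deg nb r (Done b) D = (b, 0)"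
| "vol_run V deg nb r (Probe i p k) D =
     (let a = (if i \<in> D then vol_probe V deg nb r i p else None);
          D' = (case a of Some x \<Rightarrow> insert (fst x) D | None \<Rightarrow> D);
          res = vol_run V deg nb r (k a) D'
      in (fst res, Suc (snd res)))"

text \<open>A VOLUME algorithm: given n, the queried node's ID v, its own private random string
  and the port p, it produces a decision tree; initially only v is discovered.\<close>

type_synonym vol_alg = "nat \<Rightarrow> nat \<Rightarrow> bool list \<Rightarrow> nat \<Rightarrow> (nat \<times> nat \<times> nat \<times> bool list) ptree"

definition vol_out :: "nat set \<Rightarrow> (nat \<Rightarrow> nat) \<Rightarrow> (nat \<Rightarrow> nat \<Rightarrow> nat \<times> nat) \<Rightarrow> (nat \<Rightarrow> bool list) \<Rightarrow>
    vol_alg \<Rightarrow> nat \<Rightarrow> nat \<Rightarrow> nat \<Rightarrow> bool \<times> nat" where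
  "vol_out V deg nb r A n v p = vol_run V deg nb r (A n v (r v) p) {v}"

text \<open>IDs are unique, from {1 .. n ^ kappa}; private randomness: independent uniform strings
  of length m n for each node.\<close>

definition vol_complexity_success ::
  "nat \<Rightarrow> nat \<Rightarrow> real \<Rightarrow> (nat \<Rightarrow> real) \<Rightarrow> (nat \<Rightarrow> nat) \<Rightarrow> vol_alg \<Rightarrow> bool" where
  "vol_complexity_success \<Delta> \<kappa> c T m A \<longleftrightarrow>
     (\<forall>n\<ge>2. \<forall>V deg nb. V \<subseteq> {1..n ^ \<kappa>} \<and> card V = n \<and> port_graph V deg nb \<and> max_degree_le V deg \<Delta> \<longrightarrow>
        (\<forall>r. (\<forall>v\<in>V. length (r v) = m n) \<longrightarrow> (\<forall>v\<in>V. \<forall>p<deg v.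
             real (snd (vol_out V deg nb r A n v p)) \<le> T n)) \<and>
        measure_pmf.prob (Pi_pmf V [] (\<lambda>_. random_strings (m n)))
          {r. sinkless_orientation V deg nb (\<lambda>v p. fst (vol_out V deg nb r A n v p))}
          \<ge> 1 - 1 / real n powr c)"

definition log_star :: "real \<Rightarrow> nat" where
  "log_star x = (LEAST k. ((\<lambda>y. log 2 y) ^^ k) x \<le> 1)"

end

theory Submission
  imports Defs "HOL-Library.Nat_Bijection"
begin

primrec itr :: "('a \<Rightarrow> 'a option) \<Rightarrow> nat \<Rightarrow> 'a \<Rightarrow> 'a option" where
  "itr N 0 x = Some x"
| "itr N (Suc k) x = (case itr N k x of None \<Rightarrow> None | Some y \<Rightarrow> N y)"

lemma itr_add: "itr N (a + b) x = (case itr N a x of None \<Rightarrow> None | Some y \<Rightarrow> itr N b y)"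
  by (induction b) (auto split: option.splits)

lemma itr_Suc': "itr N (Suc k) x = (case N x of None \<Rightarrow> None | Some y \<Rightarrow> itr N k y)"
  using itr_add[of N 1 k x] by (simp split: option.splits)

lemma itr_le: "itr N k x \<noteq> None \<Longrightarrow> i \<le> k \<Longrightarrow> itr N i x \<noteq> None"
proof (induction k)
  case 0 then show ?case by simp
next
  case (Suc k) then show ?case
    by (cases "i = Suc k") (auto split: option.splits simp: le_Suc_eq)
qed

definition Orb :: "('a \<Rightarrow> 'a option) \<Rightarrow> 'a \<Rightarrow> 'a set" where
  "Orb N x = {y. \<exists>i. itr N i x = Some y \<or> itr N i y = Some x}"

locale pinv =
  fixes N :: "'a \<Rightarrow> 'a option" and R :: "'a \<Rightarrow> 'a" and Dom :: "'a set"
  assumes R_inv: "x \<in> Dom \<Longrightarrow> R (R x) = x"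
    and R_dom: "x \<in> Dom \<Longrightarrow> R x \<in> Dom"
    and R_neq: "x \<in> Dom \<Longrightarrow> R x \<noteq> x"
    and N_dom1: "N x = Some z \<Longrightarrow> x \<in> Dom"
    and N_dom2: "N x = Some z \<Longrightarrow> z \<in> Dom"
    and N_sym: "N x = Some z \<Longrightarrow> N (R z) = Some (R x)"
    and N_neq: "N x \<noteq> Some (R x)"
begin

lemma N_inj: "N x = Some z \<Longrightarrow> N y = Some z \<Longrightarrow> x = y"
  by (metis N_dom1 N_sym R_inv option.inject)

lemma itr_inj: "itr N k x = Some z \<Longrightarrow> itr N k y = Some z \<Longrightarrow> x = y"
proof (induction k arbitrary: z)
  case 0 then show ?case by simp
next
  case (Suc k)
  from Suc.prems obtain a b where "itr N k x = Some a" "N a = Some z" "itr N k y = Some b" "N b = Some z"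
    by (auto split: option.splits)
  then show ?case using N_inj Suc.IH by metis
qed

lemma itr_dom: "itr N k x = Some z \<Longrightarrow> x \<in> Dom \<Longrightarrow> z \<in> Dom"
  by (induction k arbitrary: z) (auto split: option.splits intro: N_dom2)

lemma itr_dom': assumes "itr N k x = Some z" "z \<in> Dom" shows "x \<in> Dom"
proof (cases k)
  case 0 then show ?thesis using assms by simp
next
  case (Suc m)
  then show ?thesis using assms by (auto simp: itr_Suc' simp del: itr.simps(2) split: option.splits intro: N_dom1)
qed

lemma itr_sym: "itr N k x = Some z \<Longrightarrow> itr N k (R z) = Some (R x)"
proof (induction k arbitrary: z)
  case 0 then show ?case by simp
next
  case (Suc k)
  from Suc.prems obtain y where y: "itr N k x = Some y" "N y = Some z" by (auto split: option.splits)
  then have "itr N k (R y) = Some (R x)" using Suc.IH by simp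
  moreover have "N (R z) = Some (R y)" using N_sym y by simp
  ultimately show ?case by (subst itr_Suc') simp
qed

lemma no_itr_rev:
  assumes "itr N k x = Some (R x)" "x \<in> Dom"
  shows False
proof -
  have key: "\<forall>a. itr N i x = Some a \<longrightarrow> itr N (k - i) x = Some (R a)" if "i \<le> k" for i
    using that
  proof (induction i)
    case 0 then show ?case using assms by simp
  next
    case (Suc i)
    show ?case
    proof (intro allI impI)
      fix b assume b: "itr N (Suc i) x = Some b"
      then obtain a where a: "itr N i x = Some a" "N a = Some b" by (auto split: option.splits)
      with Suc have ia: "itr N (k - i) x = Some (R a)" by simp
      have "k - i = Suc (k - Suc i)" using Suc.prems by simp
      with ia obtain c where c: "itr N (k - Suc i) x = Some c" "N c = Some (R a)"
        by (auto split: option.splits)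
      have "N (R b) = Some (R a)" using N_sym a by simp
      with c have "c = R b" using N_inj by simp
      with c show "itr N (k - Suc i) x = Some (R b)" by simp
    qed
  qed
  show False
  proof (cases "even k")
    case True
    then obtain m where m: "k = 2 * m" by auto
    have "itr N m x \<noteq> None" using itr_le[of N k x m] assms m by auto
    then obtain a where a: "itr N m x = Some a" by auto
    with key[of m] m have "itr N m x = Some (R a)" by simp
    with a have "R a = a" by simp
    moreover have "a \<in> Dom" using itr_dom a assms by blast
    ultimately show False using R_neq by simp
  next
    case False
    then obtain m where m: "k = Suc (2 * m)" by (metis oddE Suc_eq_plus1)
    have "itr N m x \<noteq> None" using itr_le[of N k x m] assms m by auto
    then obtain a where a: "itr N m x = Some a" by auto
    with key[of m] m have "itr N (Suc m) x = Some (R a)" by simp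
    with a have "N a = Some (R a)" by simp
    then show False using N_neq by simp
  qed
qed

lemma orb_cmp:
  assumes "y \<in> Orb N x" "w \<in> Orb N x"
  shows "\<exists>k. itr N k y = Some w \<or> itr N k w = Some y"
proof -
  from assms obtain i j where
    i: "itr N i x = Some y \<or> itr N i y = Some x" and j: "itr N j x = Some w \<or> itr N j w = Some x"
    by (auto simp: Orb_def)
  show ?thesis
  proof (cases "i \<le> j")
    case le: True
    then obtain d where d: "j = i + d" using le_Suc_ex by blast
    show ?thesis
    proof (cases "itr N i x = Some y")
      case yi: True
      show ?thesis
      proof (cases "itr N j x = Some w")
        case True with yi d show ?thesis by (auto simp: itr_add)
      next
        case False
        with j have "itr N j w = Some x" by simp
        then have "itr N (j + i) w = Some y" using yi by (simp add: itr_add)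
        then show ?thesis by blast
      qed
    next
      case False
      with i have yx: "itr N i y = Some x" by simp
      show ?thesis
      proof (cases "itr N j x = Some w")
        case True
        then have "itr N (i + j) y = Some w" using yx by (simp add: itr_add)
        then show ?thesis by blast
      next
        case False
        with j have wx: "itr N (d + i) w = Some x" using d by (simp add: add.commute)
        then obtain w' where w': "itr N d w = Some w'" "itr N i w' = Some x"
          by (auto simp: itr_add split: option.splits)
        with yx have "w' = y" using itr_inj by blast
        with w' show ?thesis by blast
      qed
    qed
  next
    case False
    then have le: "j \<le> i" by simp
    then obtain d where d: "i = j + d" using le_Suc_ex by blast
    show ?thesis
    proof (cases "itr N j x = Some w")
      case wj: True
      show ?thesis
      proof (cases "itr N i x = Some y")
        case True with wj d show ?thesis by (auto simp: itr_add)
      next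
        case False
        with i have "itr N i y = Some x" by simp
        then have "itr N (i + j) y = Some w" using wj by (simp add: itr_add)
        then show ?thesis by blast
      qed
    next
      case False
      with j have wx: "itr N j w = Some x" by simp
      show ?thesis
      proof (cases "itr N i x = Some y")
        case True
        then have "itr N (j + i) w = Some y" using wx by (simp add: itr_add)
        then show ?thesis by blast
      next
        case False
        with i have yx: "itr N (d + j) y = Some x" using d by (simp add: add.commute)
        then obtain y' where y': "itr N d y = Some y'" "itr N j y' = Some x"
          by (auto simp: itr_add split: option.splits)
        with wx have "y' = w" using itr_inj by blast
        with y' show ?thesis by blast
      qed
    qed
  qed
qed

lemma orb_dom: "x \<in> Dom \<Longrightarrow> Orb N x \<subseteq> Dom"
  unfolding Orb_def using itr_dom itr_dom' by blast

lemma orb_self: "x \<in> Orb N x"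
  unfolding Orb_def by (auto intro: exI[of _ 0])

lemma orb_disj: "x \<in> Dom \<Longrightarrow> y \<in> Orb N x \<Longrightarrow> R y \<in> Orb N x \<Longrightarrow> False"
proof -
  assume x: "x \<in> Dom" and y: "y \<in> Orb N x" and ry: "R y \<in> Orb N x"
  have yd: "y \<in> Dom" using orb_dom x y by blast
  from orb_cmp[OF y ry] obtain k where "itr N k y = Some (R y) \<or> itr N k (R y) = Some y" by blast
  then show False
  proof
    assume "itr N k y = Some (R y)" then show False using no_itr_rev yd by blast
  next
    assume "itr N k (R y) = Some y"
    then have "itr N k (R y) = Some (R (R y))" using R_inv yd by simp
    then show False using no_itr_rev R_dom yd by blast
  qed
qed

lemma orb_R: assumes "x \<in> Dom" shows "Orb N (R x) = R ` Orb N x"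
proof
  show "Orb N (R x) \<subseteq> R ` Orb N x"
  proof
    fix y assume y: "y \<in> Orb N (R x)"
    then have yd: "y \<in> Dom" using orb_dom R_dom assms by blast
    from y obtain i where "itr N i (R x) = Some y \<or> itr N i y = Some (R x)" by (auto simp: Orb_def)
    then have "itr N i (R y) = Some x \<or> itr N i x = Some (R y)"
      using itr_sym R_inv assms by metis
    then have "R y \<in> Orb N x" by (auto simp: Orb_def)
    then show "y \<in> R ` Orb N x" using R_inv yd by (metis image_eqI)
  qed
next
  show "R ` Orb N x \<subseteq> Orb N (R x)"
  proof
    fix z assume "z \<in> R ` Orb N x"
    then obtain y where y: "y \<in> Orb N x" "z = R y" by auto
    then have yd: "y \<in> Dom" using orb_dom assms by blast
    from y obtain i where "itr N i x = Some y \<or> itr N i y = Some x" by (auto simp: Orb_def)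
    then have "itr N i (R y) = Some (R x) \<or> itr N i (R x) = Some (R y)"
      using itr_sym by metis
    then show "z \<in> Orb N (R x)" using y by (auto simp: Orb_def)
  qed
qed

lemma orb_N: assumes "N x = Some z" shows "Orb N z = Orb N x"
proof
  show "Orb N z \<subseteq> Orb N x"
  proof
    fix y assume "y \<in> Orb N z"
    then obtain i where "itr N i z = Some y \<or> itr N i y = Some z" by (auto simp: Orb_def)
    then show "y \<in> Orb N x"
    proof
      assume "itr N i z = Some y"
      then have "itr N (Suc i) x = Some y" using assms by (subst itr_Suc') simp
      then show ?thesis unfolding Orb_def by blast
    next
      assume h: "itr N i y = Some z"
      show ?thesis
      proof (cases i)
        case 0 then have "y = z" using h by simp
        then have "itr N 1 x = Some y" using assms by simp
        then show ?thesis unfolding Orb_def by blast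
      next
        case (Suc m)
        with h obtain c where "itr N m y = Some c" "N c = Some z" by (auto split: option.splits)
        then have "itr N m y = Some x" using N_inj assms by metis
        then show ?thesis unfolding Orb_def by blast
      qed
    qed
  qed
next
  show "Orb N x \<subseteq> Orb N z"
  proof
    fix y assume "y \<in> Orb N x"
    then obtain i where "itr N i x = Some y \<or> itr N i y = Some x" by (auto simp: Orb_def)
    then show "y \<in> Orb N z"
    proof
      assume h: "itr N i x = Some y"
      show ?thesis
      proof (cases i)
        case 0 then have "y = x" using h by simp
        then have "itr N 1 y = Some z" using assms by simp
        then show ?thesis unfolding Orb_def by blast
      next
        case (Suc m)
        with h have "itr N m z = Some y" using assms by (simp add: itr_Suc' del: itr.simps(2))
        then show ?thesis unfolding Orb_def by blast
      qed
    next
      assume "itr N i y = Some x"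
      then have "itr N (Suc i) y = Some z" using assms by simp
      then show ?thesis unfolding Orb_def by blast
    qed
  qed
qed

end

type_synonym dart = "nat \<times> nat"

primrec bval :: "bool list \<Rightarrow> nat" where
  "bval [] = 0"
| "bval (b # bs) = (if b then 1 else 0) + 2 * bval bs"

definition kv :: "bool list \<Rightarrow> nat" where "kv s = bval s mod 3"

definition nxtp :: "nat \<Rightarrow> bool list \<Rightarrow> nat \<Rightarrow> nat option" where
  "nxtp du s q = (if 3 \<le> du \<and> q < 3 \<and> q \<noteq> kv s then Some (3 - q - kv s) else None)"

definition dnxt :: "nat set \<Rightarrow> (nat \<Rightarrow> nat) \<Rightarrow> (nat \<Rightarrow> nat \<Rightarrow> nat \<times> nat) \<Rightarrow> (nat \<Rightarrow> bool list)
   \<Rightarrow> dart \<Rightarrow> dart option" where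
  "dnxt V deg nb r x = (case x of (v, p) \<Rightarrow>
     if v \<in> V \<and> p < deg v then
       (case nb v p of (u, q) \<Rightarrow> map_option (Pair u) (nxtp (deg u) (r u) q))
     else None)"

definition darts :: "nat set \<Rightarrow> (nat \<Rightarrow> nat) \<Rightarrow> dart set" where
  "darts V deg = {(v, p). v \<in> V \<and> p < deg v}"

definition Ot :: "nat set \<Rightarrow> (nat \<Rightarrow> nat) \<Rightarrow> (nat \<Rightarrow> nat \<Rightarrow> nat \<times> nat) \<Rightarrow> (nat \<Rightarrow> bool list)
   \<Rightarrow> dart \<Rightarrow> bool" where
  "Ot V deg nb r x = (let Ob = Orb (dnxt V deg nb r) x in
      Min (prod_encode ` (Ob \<union> case_prod nb ` Ob)) \<in> prod_encode ` Ob)"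

lemma kv_lt: "kv s < 3" by (simp add: kv_def)

lemma ar3: "q < 3 \<Longrightarrow> (k::nat) < 3 \<Longrightarrow> q \<noteq> k \<Longrightarrow>
   3 - q - k \<noteq> k \<and> 3 - q - k < 3 \<and> 3 - q - k \<noteq> q \<and> 3 - (3 - q - k) - k = q"
  by (cases q; cases k) (auto simp: less_Suc_eq numeral_3_eq_3)

locale pgr =
  fixes V :: "nat set" and deg :: "nat \<Rightarrow> nat" and nb :: "nat \<Rightarrow> nat \<Rightarrow> nat \<times> nat"
    and r :: "nat \<Rightarrow> bool list"
  assumes pg: "port_graph V deg nb"
begin

lemma finV: "finite V" using pg by (simp add: port_graph_def)

lemma nb_ok: "v \<in> V \<Longrightarrow> p < deg v \<Longrightarrow> fst (nb v p) \<in> V \<and> fst (nb v p) \<noteq> v \<and>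
   snd (nb v p) < deg (fst (nb v p)) \<and> nb (fst (nb v p)) (snd (nb v p)) = (v, p)"
  using pg by (simp add: port_graph_def)

lemma fin_darts: "finite (darts V deg)"
proof -
  have "darts V deg \<subseteq> Sigma V (\<lambda>v. {..<deg v})" by (auto simp: darts_def)
  then show ?thesis using finV finite_subset by blast
qed

sublocale pinv "dnxt V deg nb r" "case_prod nb" "darts V deg"
proof
  fix x assume "x \<in> darts V deg"
  then obtain v p where x: "x = (v, p)" "v \<in> V" "p < deg v" by (auto simp: darts_def)
  have h: "fst (nb v p) \<in> V \<and> fst (nb v p) \<noteq> v \<and>
   snd (nb v p) < deg (fst (nb v p)) \<and> nb (fst (nb v p)) (snd (nb v p)) = (v, p)"
    using nb_ok x by blast
  show "case_prod nb (case_prod nb x) = x" using h x by (cases "nb v p") auto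
  show "case_prod nb x \<in> darts V deg" using h x by (cases "nb v p") (auto simp: darts_def)
  show "case_prod nb x \<noteq> x" using h x by (cases "nb v p") auto
next
  fix x z assume "dnxt V deg nb r x = Some z"
  then show "x \<in> darts V deg" by (auto simp: dnxt_def darts_def split: prod.splits if_splits)
next
  fix x z assume a: "dnxt V deg nb r x = Some z"
  then obtain v p where x: "x = (v, p)" "v \<in> V" "p < deg v"
    by (auto simp: dnxt_def split: prod.splits if_splits)
  obtain u q where uq: "nb v p = (u, q)" by fastforce
  have h: "u \<in> V" "u \<noteq> v" "q < deg u" "nb u q = (v, p)" using nb_ok[OF x(2,3)] uq by auto
  from a x uq have z: "z = (u, 3 - q - kv (r u))" "3 \<le> deg u" "q < 3" "q \<noteq> kv (r u)"
    by (auto simp: dnxt_def nxtp_def split: if_splits)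
  show "z \<in> darts V deg" using z h by (auto simp: darts_def)
  have p'lt: "3 - q - kv (r u) < deg u" using z by simp
  obtain w s where ws: "nb u (3 - q - kv (r u)) = (w, s)" by fastforce
  have h2: "w \<in> V" "s < deg w" "nb w s = (u, 3 - q - kv (r u))"
    using nb_ok[OF h(1) p'lt] ws by auto
  have "3 - (3 - q - kv (r u)) - kv (r u) = q" using z kv_lt[of "r u"] by simp
  moreover have "3 - q - kv (r u) \<noteq> kv (r u)" "3 - q - kv (r u) < 3" using z kv_lt[of "r u"] ar3 by auto
  ultimately show "dnxt V deg nb r (case_prod nb z) = Some (case_prod nb x)"
    using h2 z x uq ws by (simp add: dnxt_def nxtp_def)
next
  fix x
  show "dnxt V deg nb r x \<noteq> Some (case_prod nb x)"
  proof
    assume a: "dnxt V deg nb r x = Some (case_prod nb x)"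
    then obtain v p where x: "x = (v, p)" "v \<in> V" "p < deg v"
      by (auto simp: dnxt_def split: prod.splits if_splits)
    obtain u q where uq: "nb v p = (u, q)" by fastforce
    from a x uq have "3 - q - kv (r u) = q" "q < 3" "q \<noteq> kv (r u)"
      by (auto simp: dnxt_def nxtp_def split: if_splits)
    then show False using kv_lt[of "r u"] ar3 by blast
  qed
qed

abbreviation "N \<equiv> dnxt V deg nb r"
abbreviation "R \<equiv> case_prod nb"

lemma fin_orb: "x \<in> darts V deg \<Longrightarrow> finite (Orb N x)"
  using orb_dom fin_darts finite_subset by blast

lemma Ot_rev:
  assumes x: "x \<in> darts V deg"
  shows "Ot V deg nb r (R x) = (\<not> Ot V deg nb r x)"
proof -
  define Ob where "Ob = Orb N x"
  have OR: "Orb N (R x) = R ` Ob" using orb_R x Ob_def by simp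
  have RR: "R ` R ` Ob = Ob"
  proof -
    have "\<And>y. y \<in> Ob \<Longrightarrow> R (R y) = y" using R_inv orb_dom x Ob_def by blast
    then show ?thesis by (force simp: image_image)
  qed
  define A where "A = prod_encode ` (Ob \<union> R ` Ob)"
  have A2: "prod_encode ` (R ` Ob \<union> R ` R ` Ob) = A" using RR A_def by (simp add: Un_commute)
  have fin: "finite A" using fin_orb x Ob_def A_def by simp
  have ne: "A \<noteq> {}" using orb_self[of x] Ob_def A_def by auto
  have m: "Min A \<in> A" using Min_in fin ne by blast
  have disj: "prod_encode ` Ob \<inter> prod_encode ` (R ` Ob) = {}"
  proof -
    have "Ob \<inter> R ` Ob = {}"
    proof (rule ccontr)
      assume "Ob \<inter> R ` Ob \<noteq> {}"
      then obtain y where "y \<in> Ob" "R y \<in> Ob"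
      proof -
        from \<open>Ob \<inter> R ` Ob \<noteq> {}\<close> obtain z where z: "z \<in> Ob" "z \<in> R ` Ob" by blast
        then obtain y where y: "y \<in> Ob" "z = R y" by blast
        then show ?thesis using that z by blast
      qed
      then show False using orb_disj x Ob_def by blast
    qed
    then show ?thesis using inj_prod_encode by (auto simp: inj_on_def)
  qed
  have "Ot V deg nb r (R x) = (Min A \<in> prod_encode ` (R ` Ob))"
    unfolding Ot_def Let_def OR using A2 by simp
  also have "\<dots> = (\<not> (Min A \<in> prod_encode ` Ob))"
  proof -
    have "A = prod_encode ` Ob \<union> prod_encode ` (R ` Ob)" by (simp add: A_def image_Un)
    then show ?thesis using m disj by blast
  qed
  also have "(Min A \<in> prod_encode ` Ob) = Ot V deg nb r x" unfolding Ot_def Let_def A_def Ob_def by simp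
  finally show ?thesis .
qed

lemma Ot_nxt: "N x = Some z \<Longrightarrow> Ot V deg nb r z = Ot V deg nb r x"
  unfolding Ot_def using orb_N by simp

lemma Ot_sinkless: "sinkless_orientation V deg nb (\<lambda>v p. Ot V deg nb r (v, p))"
  unfolding sinkless_orientation_def
proof (intro conjI ballI allI impI)
  fix v p assume "v \<in> V" "p < deg v"
  then have x: "(v, p) \<in> darts V deg" by (simp add: darts_def)
  have "Ot V deg nb r (R (v, p)) = (\<not> Ot V deg nb r (v, p))" using Ot_rev[OF x] .
  then show "Ot V deg nb r (v, p) \<noteq> Ot V deg nb r (fst (nb v p), snd (nb v p))" by simp
next
  fix v assume v: "v \<in> V" "3 \<le> deg v"
  define k where "k = kv (r v)"
  have k3: "k < 3" using kv_lt k_def by simp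
  define a where "a = (if k = 0 then 1 else (0::nat))"
  have a: "a < 3" "a \<noteq> k" by (auto simp: a_def)
  define b where "b = 3 - a - k"
  have ad: "a < deg v" "b < deg v" using a v b_def by auto
  obtain u q where uq: "nb v a = (u, q)" by fastforce
  have h: "u \<in> V" "q < deg u" "nb u q = (v, a)" using nb_ok[OF v(1) ad(1)] uq by auto
  have "N (u, q) = Some (v, b)" using h v a b_def k_def by (simp add: dnxt_def nxtp_def)
  then have e: "Ot V deg nb r (v, b) = Ot V deg nb r (u, q)" using Ot_nxt by blast
  have "Ot V deg nb r (u, q) = (\<not> Ot V deg nb r (v, a))"
    using Ot_rev[of "(v,a)"] ad v uq by (simp add: darts_def)
  then have "Ot V deg nb r (v, a) \<or> Ot V deg nb r (v, b)" using e by blast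
  then show "\<exists>p<deg v. Ot V deg nb r (v, p)" using ad by blast
qed

end

datatype wres = WFail | WOk "(dart \<times> dart) list"

primrec walkT :: "('i \<Rightarrow> nat \<times> nat \<times> nat \<times> bool list) \<Rightarrow> nat \<Rightarrow> dart \<Rightarrow> dart \<Rightarrow> (dart \<times> dart) list
    \<Rightarrow> (wres \<Rightarrow> 'i ptree) \<Rightarrow> 'i ptree" where
  "walkT g 0 s x acc k = k WFail"
| "walkT g (Suc f) s x acc k = Probe (fst x) (snd x) (\<lambda>a. case a of None \<Rightarrow> k WFail
     | Some i \<Rightarrow> (case g i of (y, dy, q, str) \<Rightarrow>
         (case nxtp dy str q of None \<Rightarrow> k (WOk ((x, (y, q)) # acc))
          | Some p' \<Rightarrow> if (y, p') = s then k (WOk ((x, (y, q)) # acc))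
                       else walkT g f s (y, p') ((x, (y, q)) # acc) k)))"

primrec wk :: "nat set \<Rightarrow> (nat \<Rightarrow> nat) \<Rightarrow> (nat \<Rightarrow> nat \<Rightarrow> nat \<times> nat) \<Rightarrow> (nat \<Rightarrow> bool list)
    \<Rightarrow> nat \<Rightarrow> dart \<Rightarrow> dart \<Rightarrow> (dart \<times> dart) list \<Rightarrow> wres" where
  "wk V deg nb r 0 s x acc = WFail"
| "wk V deg nb r (Suc f) s x acc = (case dnxt V deg nb r x of
      None \<Rightarrow> WOk ((x, case_prod nb x) # acc)
    | Some z \<Rightarrow> if z = s then WOk ((x, case_prod nb x) # acc)
               else wk V deg nb r f s z ((x, case_prod nb x) # acc))"

definition decide :: "(dart \<times> dart) list \<Rightarrow> (dart \<times> dart) list \<Rightarrow> bool" where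
  "decide l1 l2 = (let F = fst ` set l1 \<union> snd ` set l2; A = F \<union> snd ` set l1 \<union> fst ` set l2 in
      Min (prod_encode ` A) \<in> prod_encode ` F)"

definition algT :: "('i \<Rightarrow> nat \<times> nat \<times> nat \<times> bool list) \<Rightarrow> nat \<Rightarrow> nat \<Rightarrow> nat \<Rightarrow> 'i ptree" where
  "algT g f v p = walkT g f (v, p) (v, p) [] (\<lambda>r1. case r1 of WFail \<Rightarrow> Done False
     | WOk l1 \<Rightarrow> walkT g f (snd (last l1)) (snd (last l1)) [] (\<lambda>r2. case r2 of WFail \<Rightarrow> Done False
         | WOk l2 \<Rightarrow> Done (decide l1 l2)))"

context pgr
begin

lemma wk_last: "wk V deg nb r f s z acc = WOk l \<Longrightarrow> \<exists>pre. l = pre @ ((z, R z) # acc)"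
proof (induction f arbitrary: z acc)
  case 0 then show ?case by simp
next
  case (Suc f)
  show ?case
  proof (cases "N z")
    case None then show ?thesis using Suc.prems by simp
  next
    case (Some z')
    show ?thesis
    proof (cases "z' = s")
      case True then show ?thesis using Suc.prems Some by simp
    next
      case False
      then have "wk V deg nb r f s z' ((z, R z) # acc) = WOk l" using Suc.prems Some by simp
      from Suc.IH[OF this] obtain pre where "l = pre @ (z', R z') # (z, R z) # acc" by blast
      then show ?thesis by (intro exI[of _ "pre @ [(z', R z')]"]) simp
    qed
  qed
qed

lemma lca_walk:
  assumes g: "\<And>y dy q. g (y, dy, q) = (y, dy, q, r y)"
  shows "x \<in> darts V deg \<Longrightarrow> \<exists>c\<le>f. lca_run V deg nb (walkT g f s x acc k) =
     (fst (lca_run V deg nb (k (wk V deg nb r f s x acc))),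
      snd (lca_run V deg nb (k (wk V deg nb r f s x acc))) + c)"
proof (induction f arbitrary: x acc)
  case 0 then show ?case by simp
next
  case (Suc f)
  obtain v p where x: "x = (v, p)" "v \<in> V" "p < deg v" using Suc.prems by (auto simp: darts_def)
  obtain u q where uq: "nb v p = (u, q)" by fastforce
  have pr: "lca_probe V deg nb v p = Some (u, deg u, q)" using x uq by (simp add: lca_probe_def)
  have Nx: "N x = map_option (Pair u) (nxtp (deg u) (r u) q)" using x uq by (simp add: dnxt_def)
  show ?case
  proof (cases "nxtp (deg u) (r u) q")
    case None
    then show ?thesis using x uq pr Nx g by (auto simp: Let_def intro!: exI[of _ 1])
  next
    case (Some p')
    show ?thesis
    proof (cases "(u, p') = s")
      case True
      then show ?thesis using x uq pr Nx g Some by (auto simp: Let_def intro!: exI[of _ 1])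
    next
      case False
      have z: "(u, p') \<in> darts V deg" using N_dom2 Nx Some by simp
      from Suc.IH[OF z, of "((v, p), (u, q)) # acc"] obtain c where c: "c \<le> f"
        "lca_run V deg nb (walkT g f s (u, p') (((v, p), u, q) # acc) k) =
     (fst (lca_run V deg nb (k (wk V deg nb r f s (u, p') (((v, p), u, q) # acc)))),
      snd (lca_run V deg nb (k (wk V deg nb r f s (u, p') (((v, p), u, q) # acc)))) + c)" by blast
      show ?thesis using x uq pr Nx g Some False c
        by (auto simp: Let_def intro!: exI[of _ "Suc c"])
    qed
  qed
qed

lemma vol_walk:
  shows "x \<in> darts V deg \<Longrightarrow> fst x \<in> D \<Longrightarrow> \<exists>c\<le>f. \<exists>D'. D \<subseteq> D' \<and> (\<forall>l. wk V deg nb r f s x acc = WOk l \<longrightarrow> (\<forall>e\<in>set l - set acc. fst (snd e) \<in> D')) \<and>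
     vol_run V deg nb r (walkT (\<lambda>i. i) f s x acc k) D =
     (fst (vol_run V deg nb r (k (wk V deg nb r f s x acc)) D'),
      snd (vol_run V deg nb r (k (wk V deg nb r f s x acc)) D') + c)"
proof (induction f arbitrary: x acc D)
  case 0 show ?case by (rule exI[of _ 0]) auto
next
  case (Suc f)
  obtain v p where x: "x = (v, p)" "v \<in> V" "p < deg v" using Suc.prems by (auto simp: darts_def)
  obtain u q where uq: "nb v p = (u, q)" by fastforce
  have vD: "v \<in> D" using Suc.prems x by simp
  have pr: "vol_probe V deg nb r v p = Some (u, deg u, q, r u)" using x uq by (simp add: vol_probe_def)
  have Nx: "N x = map_option (Pair u) (nxtp (deg u) (r u) q)" using x uq by (simp add: dnxt_def)
  show ?case
  proof (cases "nxtp (deg u) (r u) q")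
    case None
    then show ?thesis using x uq pr Nx vD
      by (auto simp: Let_def intro!: exI[of _ 1] exI[of _ "insert u D"])
  next
    case (Some p')
    show ?thesis
    proof (cases "(u, p') = s")
      case True
      then show ?thesis using x uq pr Nx Some vD
        by (auto simp: Let_def intro!: exI[of _ 1] exI[of _ "insert u D"])
    next
      case False
      have z: "(u, p') \<in> darts V deg" using N_dom2 Nx Some by simp
      from Suc.IH[OF z, of "insert u D" "((v, p), (u, q)) # acc"] obtain c D' where c: "c \<le> f"
        "insert u D \<subseteq> D'"
        "\<forall>l. wk V deg nb r f s (u, p') (((v, p), u, q) # acc) = WOk l \<longrightarrow>
            (\<forall>e\<in>set l - set (((v, p), u, q) # acc). fst (snd e) \<in> D')"
        "vol_run V deg nb r (walkT (\<lambda>i. i) f s (u, p') (((v, p), u, q) # acc) k) (insert u D) =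
     (fst (vol_run V deg nb r (k (wk V deg nb r f s (u, p') (((v, p), u, q) # acc))) D'),
      snd (vol_run V deg nb r (k (wk V deg nb r f s (u, p') (((v, p), u, q) # acc))) D') + c)" by auto
      have c3: "\<forall>l. wk V deg nb r (Suc f) s x acc = WOk l \<longrightarrow> (\<forall>e\<in>set l - set acc. fst (snd e) \<in> D')"
      proof (intro allI impI ballI)
        fix l e assume l: "wk V deg nb r (Suc f) s x acc = WOk l" and e: "e \<in> set l - set acc"
        have "wk V deg nb r f s (u, p') (((v, p), u, q) # acc) = WOk l"
          using l x uq Nx Some False by simp
        then show "fst (snd e) \<in> D'" using c(2,3) e by (cases "e = ((v, p), u, q)") auto
      qed
      show ?thesis using x uq pr Nx Some False c vD c3
        by (auto simp: Let_def intro!: exI[of _ "Suc c"] exI[of _ D'])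
    qed
  qed
qed

end

definition fwd :: "('a \<Rightarrow> 'a option) \<Rightarrow> 'a \<Rightarrow> 'a set" where
  "fwd N x = {y. \<exists>i. itr N i x = Some y}"

lemma itr_None_after: "itr N m x = None \<Longrightarrow> m \<le> i \<Longrightarrow> itr N i x = None"
  using itr_le[of N i x m] by (cases "itr N i x") auto

lemma itr_periodic: "itr N (Suc m) x = Some x \<Longrightarrow> itr N i x = itr N (i mod Suc m) x"
proof (induction i rule: less_induct)
  case (less i)
  show ?case
  proof (cases "i < Suc m")
    case True then show ?thesis by simp
  next
    case False
    then obtain b where b: "i = Suc m + b" using le_Suc_ex not_less by blast
    have "itr N (Suc m + b) x = itr N b x" by (simp only: itr_add less.prems option.case)
    then have "itr N i x = itr N b x" using b by simp
    also have "\<dots> = itr N (b mod Suc m) x" using less.IH[of b] less.prems b by simp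
    also have "b mod Suc m = i mod Suc m" using b by (metis mod_add_self1)
    finally show ?thesis .
  qed
qed

lemma fwd_full:
  assumes "itr N (Suc m) x = None \<or> itr N (Suc m) x = Some x"
  shows "fwd N x = {y. \<exists>i\<le>m. itr N i x = Some y}"
proof
  show "fwd N x \<subseteq> {y. \<exists>i\<le>m. itr N i x = Some y}"
  proof
    fix y assume "y \<in> fwd N x"
    then obtain i where i: "itr N i x = Some y" by (auto simp: fwd_def)
    from assms show "y \<in> {y. \<exists>i\<le>m. itr N i x = Some y}"
    proof
      assume "itr N (Suc m) x = None"
      then have "i \<le> m" using itr_None_after[of N "Suc m" x i] i by (cases "Suc m \<le> i") auto
      then show ?thesis using i by blast
    next
      assume "itr N (Suc m) x = Some x"
      then have "itr N (i mod Suc m) x = Some y" using itr_periodic i by metis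
      moreover have "i mod Suc m \<le> m" by (simp add: less_Suc_eq_le)
      ultimately show ?thesis by blast
    qed
  qed
next
  show "{y. \<exists>i\<le>m. itr N i x = Some y} \<subseteq> fwd N x" by (auto simp: fwd_def)
qed

context pgr
begin

lemma wk_ok: "wk V deg nb r f s z acc = WOk l \<Longrightarrow> \<exists>m. set l = set acc \<union> (\<lambda>y. (y, R y)) ` {y. \<exists>i\<le>m. itr N i z = Some y}
   \<and> (itr N (Suc m) z = None \<or> itr N (Suc m) z = Some s)"
proof (induction f arbitrary: z acc)
  case 0 then show ?case by simp
next
  case (Suc f)
  show ?case
  proof (cases "N z")
    case None
    then have "set l = set acc \<union> (\<lambda>y. (y, R y)) ` {y. \<exists>i\<le>0. itr N i z = Some y}" using Suc.prems by auto
    then show ?thesis using None by (intro exI[of _ 0]) simp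
  next
    case (Some z')
    show ?thesis
    proof (cases "z' = s")
      case True
      then have "set l = set acc \<union> (\<lambda>y. (y, R y)) ` {y. \<exists>i\<le>0. itr N i z = Some y}" using Suc.prems Some by auto
      then show ?thesis using Some True by (intro exI[of _ 0]) simp
    next
      case False
      then have "wk V deg nb r f s z' ((z, R z) # acc) = WOk l" using Suc.prems Some by simp
      from Suc.IH[OF this] obtain m where m:
        "set l = set ((z, R z) # acc) \<union> (\<lambda>y. (y, R y)) ` {y. \<exists>i\<le>m. itr N i z' = Some y}"
        "itr N (Suc m) z' = None \<or> itr N (Suc m) z' = Some s" by blast
      have sh: "\<And>i. itr N (Suc i) z = itr N i z'" using Some by (simp add: itr_Suc' del: itr.simps)
      have "{y. \<exists>i\<le>Suc m. itr N i z = Some y} = insert z {y. \<exists>i\<le>m. itr N i z' = Some y}"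
      proof (intro set_eqI iffI)
        fix y assume "y \<in> {y. \<exists>i\<le>Suc m. itr N i z = Some y}"
        then obtain i where i: "i \<le> Suc m" "itr N i z = Some y" by blast
        show "y \<in> insert z {y. \<exists>i\<le>m. itr N i z' = Some y}"
        proof (cases i)
          case 0 then show ?thesis using i by simp
        next
          case (Suc j) then show ?thesis using i sh by auto
        qed
      next
        fix y assume "y \<in> insert z {y. \<exists>i\<le>m. itr N i z' = Some y}"
        then show "y \<in> {y. \<exists>i\<le>Suc m. itr N i z = Some y}"
        proof
          assume "y = z" then show ?thesis by (intro CollectI exI[of _ 0]) simp
        next
          assume "y \<in> {y. \<exists>i\<le>m. itr N i z' = Some y}"
          then obtain i where "i \<le> m" "itr N i z' = Some y" by blast
          then show ?thesis using sh by (intro CollectI exI[of _ "Suc i"]) simp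
        qed
      qed
      then have s1: "set l = set acc \<union> (\<lambda>y. (y, R y)) ` {y. \<exists>i\<le>Suc m. itr N i z = Some y}"
        unfolding m(1) by auto
      have s2: "itr N (Suc (Suc m)) z = None \<or> itr N (Suc (Suc m)) z = Some s"
        unfolding sh using m(2) .
      show ?thesis using s1 s2 by blast
    qed
  qed
qed

lemma wk_ok0: assumes "wk V deg nb r f x x [] = WOk l"
  shows "set l = (\<lambda>y. (y, R y)) ` fwd N x"
proof -
  from wk_ok[OF assms] obtain m where m: "set l = (\<lambda>y. (y, R y)) ` {y. \<exists>i\<le>m. itr N i x = Some y}"
     "itr N (Suc m) x = None \<or> itr N (Suc m) x = Some x" by auto
  have "fwd N x = {y. \<exists>i\<le>m. itr N i x = Some y}" using fwd_full[OF m(2)] .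
  then show ?thesis using m(1) by simp
qed

lemma fwd_dom: "x \<in> darts V deg \<Longrightarrow> fwd N x \<subseteq> darts V deg"
  unfolding fwd_def using itr_dom by blast

lemma orb_fwd: assumes x: "x \<in> darts V deg" shows "Orb N x = fwd N x \<union> R ` fwd N (R x)"
proof -
  have "{y. \<exists>i. itr N i y = Some x} = R ` fwd N (R x)"
  proof (intro set_eqI iffI)
    fix y assume "y \<in> {y. \<exists>i. itr N i y = Some x}"
    then obtain i where i: "itr N i y = Some x" by blast
    then have yd: "y \<in> darts V deg" using itr_dom' x by blast
    have "itr N i (R x) = Some (R y)" using itr_sym[OF i] .
    then have "R y \<in> fwd N (R x)" by (auto simp: fwd_def)
    then show "y \<in> R ` fwd N (R x)" using R_inv[OF yd] by (metis image_eqI)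
  next
    fix y assume "y \<in> R ` fwd N (R x)"
    then obtain w i where w: "y = R w" "itr N i (R x) = Some w" by (auto simp: fwd_def)
    have "itr N i (R w) = Some (R (R x))" using itr_sym[OF w(2)] .
    then show "y \<in> {y. \<exists>i. itr N i y = Some x}" using w R_inv[OF x] by auto
  qed
  then show ?thesis unfolding Orb_def fwd_def by blast
qed

lemma decide_ok:
  assumes x: "x \<in> darts V deg" and l1: "wk V deg nb r f x x [] = WOk l1"
    and l2: "wk V deg nb r f (R x) (R x) [] = WOk l2"
  shows "decide l1 l2 = Ot V deg nb r x"
proof -
  have s1: "set l1 = (\<lambda>y. (y, R y)) ` fwd N x" using wk_ok0[OF l1] .
  have s2: "set l2 = (\<lambda>y. (y, R y)) ` fwd N (R x)" using wk_ok0[OF l2] .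
  have Rx: "R x \<in> darts V deg" using R_dom x by blast
  have F: "fst ` set l1 \<union> snd ` set l2 = Orb N x"
    using s1 s2 orb_fwd[OF x] by (simp add: image_image)
  have RR: "R ` R ` fwd N (R x) = fwd N (R x)"
  proof -
    have "\<And>y. y \<in> fwd N (R x) \<Longrightarrow> R (R y) = y" using fwd_dom[OF Rx] R_inv by blast
    then show ?thesis by (force simp: image_image)
  qed
  have A: "fst ` set l1 \<union> snd ` set l2 \<union> snd ` set l1 \<union> fst ` set l2 = Orb N x \<union> R ` Orb N x"
  proof -
    have "R ` Orb N x = R ` fwd N x \<union> fwd N (R x)" using orb_fwd[OF x] RR by (simp add: image_Un)
    then show ?thesis using F s1 s2 by (auto simp: image_image)
  qed
  show ?thesis unfolding decide_def Ot_def Let_def using F A by simp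
qed

lemma lca_alg:
  fixes g :: "nat \<times> nat \<times> nat \<Rightarrow> nat \<times> nat \<times> nat \<times> bool list"
  assumes g: "\<And>y dy q. g (y, dy, q) = (y, dy, q, r y)" and x: "(v, p) \<in> darts V deg"
  shows "snd (lca_run V deg nb (algT g f v p)) \<le> 2 * f \<and>
    (wk V deg nb r f (v, p) (v, p) [] \<noteq> WFail \<longrightarrow> wk V deg nb r f (nb v p) (nb v p) [] \<noteq> WFail \<longrightarrow>
      fst (lca_run V deg nb (algT g f v p)) = Ot V deg nb r (v, p))"
proof -
  define K2 :: "(dart \<times> dart) list \<Rightarrow> wres \<Rightarrow> (nat \<times> nat \<times> nat) ptree"
    where "K2 = (\<lambda>l1 r2. case r2 of WFail \<Rightarrow> Done False | WOk l2 \<Rightarrow> Done (decide l1 l2))"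
  define K1 where "K1 = (\<lambda>r1. case r1 of WFail \<Rightarrow> Done False
     | WOk l1 \<Rightarrow> walkT g f (snd (last l1)) (snd (last l1)) [] (K2 l1))"
  have alg: "algT g f v p = walkT g f (v, p) (v, p) [] K1" unfolding algT_def K1_def K2_def by simp
  from lca_walk[OF g x, of f "(v,p)" "[]" K1] obtain c1 where c1: "c1 \<le> f"
    "lca_run V deg nb (walkT g f (v, p) (v, p) [] K1) =
     (fst (lca_run V deg nb (K1 (wk V deg nb r f (v, p) (v, p) []))),
      snd (lca_run V deg nb (K1 (wk V deg nb r f (v, p) (v, p) []))) + c1)" by blast
  show ?thesis
  proof (cases "wk V deg nb r f (v, p) (v, p) []")
    case WFail
    then show ?thesis using alg c1 by (simp add: K1_def)
  next
    case (WOk l1)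
    from wk_last[OF WOk] have last1: "snd (last l1) = nb v p" by auto
    have Rx: "nb v p \<in> darts V deg" using R_dom x by fastforce
    from lca_walk[OF g Rx, of f "nb v p" "[]" "K2 l1"] obtain c2 where c2: "c2 \<le> f"
      "lca_run V deg nb (walkT g f (nb v p) (nb v p) [] (K2 l1)) =
     (fst (lca_run V deg nb (K2 l1 (wk V deg nb r f (nb v p) (nb v p) []))),
      snd (lca_run V deg nb (K2 l1 (wk V deg nb r f (nb v p) (nb v p) []))) + c2)" by blast
    show ?thesis
    proof (cases "wk V deg nb r f (nb v p) (nb v p) []")
      case WFail
      then show ?thesis using alg c1 c2 WOk last1 by (simp add: K1_def K2_def)
    next
      case WOk2: (WOk l2)
      have "decide l1 l2 = Ot V deg nb r (v, p)" using decide_ok[OF x] WOk WOk2 by simp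
      then show ?thesis using alg c1 c2 WOk WOk2 last1 by (simp add: K1_def K2_def)
    qed
  qed
qed

lemma vol_alg:
  assumes x: "(v, p) \<in> darts V deg"
  shows "snd (vol_run V deg nb r (algT (\<lambda>i. i) f v p) {v}) \<le> 2 * f \<and>
    (wk V deg nb r f (v, p) (v, p) [] \<noteq> WFail \<longrightarrow> wk V deg nb r f (nb v p) (nb v p) [] \<noteq> WFail \<longrightarrow>
      fst (vol_run V deg nb r (algT (\<lambda>i. i) f v p) {v}) = Ot V deg nb r (v, p))"
proof -
  define K2 :: "(dart \<times> dart) list \<Rightarrow> wres \<Rightarrow> (nat \<times> nat \<times> nat \<times> bool list) ptree"
    where "K2 = (\<lambda>l1 r2. case r2 of WFail \<Rightarrow> Done False | WOk l2 \<Rightarrow> Done (decide l1 l2))"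
  define K1 where "K1 = (\<lambda>r1. case r1 of WFail \<Rightarrow> Done False
     | WOk l1 \<Rightarrow> walkT (\<lambda>i. i) f (snd (last l1)) (snd (last l1)) [] (K2 l1))"
  have alg: "algT (\<lambda>i. i) f v p = walkT (\<lambda>i. i) f (v, p) (v, p) [] K1" unfolding algT_def K1_def K2_def by simp
  from vol_walk[OF x, of "{v}" f "(v,p)" "[]" K1] obtain c1 D1 where c1: "c1 \<le> f"
    "\<forall>l. wk V deg nb r f (v, p) (v, p) [] = WOk l \<longrightarrow> (\<forall>e\<in>set l - set []. fst (snd e) \<in> D1)"
    "vol_run V deg nb r (walkT (\<lambda>i. i) f (v, p) (v, p) [] K1) {v} =
     (fst (vol_run V deg nb r (K1 (wk V deg nb r f (v, p) (v, p) [])) D1),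
      snd (vol_run V deg nb r (K1 (wk V deg nb r f (v, p) (v, p) [])) D1) + c1)" by auto
  show ?thesis
  proof (cases "wk V deg nb r f (v, p) (v, p) []")
    case WFail
    then show ?thesis using alg c1 by (simp add: K1_def)
  next
    case (WOk l1)
    from wk_last[OF WOk] obtain pre where pre: "l1 = pre @ [((v, p), nb v p)]" by auto
    then have last1: "snd (last l1) = nb v p" by simp
    have inD: "fst (nb v p) \<in> D1" using c1(2) WOk pre by auto
    have Rx: "nb v p \<in> darts V deg" using R_dom x by fastforce
    from vol_walk[OF Rx, of D1 f "nb v p" "[]" "K2 l1"] inD obtain c2 D2 where c2: "c2 \<le> f"
      "vol_run V deg nb r (walkT (\<lambda>i. i) f (nb v p) (nb v p) [] (K2 l1)) D1 =
     (fst (vol_run V deg nb r (K2 l1 (wk V deg nb r f (nb v p) (nb v p) [])) D2),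
      snd (vol_run V deg nb r (K2 l1 (wk V deg nb r f (nb v p) (nb v p) [])) D2) + c2)" by auto
    show ?thesis
    proof (cases "wk V deg nb r f (nb v p) (nb v p) []")
      case WFail
      then show ?thesis using alg c1 c2 WOk last1 by (simp add: K1_def K2_def)
    next
      case WOk2: (WOk l2)
      have "decide l1 l2 = Ot V deg nb r (v, p)" using decide_ok[OF x] WOk WOk2 by simp
      then show ?thesis using alg c1 c2 WOk WOk2 last1 by (simp add: K1_def K2_def)
    qed
  qed
qed

end

definition stepk :: "(nat \<Rightarrow> nat) \<Rightarrow> (nat \<Rightarrow> nat \<Rightarrow> nat \<times> nat) \<Rightarrow> dart \<Rightarrow> nat \<Rightarrow> dart option" where
  "stepk deg nb x k = (case nb (fst x) (snd x) of (u, q) \<Rightarrow>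
     if 3 \<le> deg u \<and> q < 3 \<and> q \<noteq> k then Some (u, 3 - q - k) else None)"

definition hdd :: "(nat \<Rightarrow> nat \<Rightarrow> nat \<times> nat) \<Rightarrow> dart \<Rightarrow> nat" where
  "hdd nb x = fst (nb (fst x) (snd x))"

primrec VK :: "(nat \<Rightarrow> nat) \<Rightarrow> (nat \<Rightarrow> nat \<Rightarrow> nat \<times> nat) \<Rightarrow> dart \<Rightarrow> nat \<Rightarrow> nat list set" where
  "VK deg nb x 0 = {[]}"
| "VK deg nb x (Suc f) = (\<Union>k\<in>{k. k < 3 \<and> stepk deg nb x k \<noteq> None}.
      (\<lambda>ks. k # ks) ` VK deg nb (the (stepk deg nb x k)) f)"

primrec heads :: "(nat \<Rightarrow> nat) \<Rightarrow> (nat \<Rightarrow> nat \<Rightarrow> nat \<times> nat) \<Rightarrow> dart \<Rightarrow> nat list \<Rightarrow> nat list" where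
  "heads deg nb x [] = []"
| "heads deg nb x (k # ks) = hdd nb x # (case stepk deg nb x k of None \<Rightarrow> [] | Some z \<Rightarrow> heads deg nb z ks)"

definition Ev :: "(nat \<Rightarrow> nat) \<Rightarrow> (nat \<Rightarrow> nat \<Rightarrow> nat \<times> nat) \<Rightarrow> dart \<Rightarrow> nat list \<Rightarrow> (nat \<Rightarrow> bool list) set" where
  "Ev deg nb x ks = {r. \<forall>j<length ks. kv (r (heads deg nb x ks ! j)) = ks ! j}"

definition Bad :: "nat set \<Rightarrow> (nat \<Rightarrow> nat) \<Rightarrow> (nat \<Rightarrow> nat \<Rightarrow> nat \<times> nat) \<Rightarrow> nat \<Rightarrow> dart \<Rightarrow> (nat \<Rightarrow> bool list) set" where
  "Bad V deg nb f x = {r. \<forall>j\<in>{1..f}. itr (dnxt V deg nb r) j x \<noteq> None \<and> itr (dnxt V deg nb r) j x \<noteq> Some x}"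

lemma map_upt_Suc0: "map g [0..<Suc f] = g 0 # map (\<lambda>j. g (Suc j)) [0..<f]"
  by (induction f) auto

lemma card_VK: "card (VK deg nb x f) \<le> 2 ^ f \<and> finite (VK deg nb x f)"
proof (induction f arbitrary: x)
  case 0 then show ?case by simp
next
  case (Suc f)
  define K where "K = {k. k < 3 \<and> stepk deg nb x k \<noteq> None}"
  obtain u q where uq: "nb (fst x) (snd x) = (u, q)" by fastforce
  have K: "K \<subseteq> {..<3} - {q}" using uq by (auto simp: K_def stepk_def split: if_splits)
  have K2: "q \<ge> 3 \<Longrightarrow> K = {}" using uq by (auto simp: K_def stepk_def split: if_splits)
  have "card K \<le> 2"
  proof (cases "q < 3")
    case True
    have "card K \<le> card ({..<3::nat} - {q})" using K by (intro card_mono) auto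
    also have "\<dots> = 2" using True by (simp add: card_Diff_singleton)
    finally show ?thesis .
  next
    case False then show ?thesis using K2 by simp
  qed
  have finK: "finite K" using K finite_subset by blast
  have "card (VK deg nb x (Suc f)) \<le> (\<Sum>k\<in>K. card ((\<lambda>ks. k # ks) ` VK deg nb (the (stepk deg nb x k)) f))"
    unfolding VK.simps K_def[symmetric] by (rule card_UN_le[OF finK])
  also have "\<dots> \<le> (\<Sum>k\<in>K. 2 ^ f)"
    by (intro sum_mono order.trans[OF card_image_le]) (use Suc.IH in auto)
  also have "\<dots> = card K * 2 ^ f" by simp
  also have "\<dots> \<le> 2 ^ Suc f" using \<open>card K \<le> 2\<close> by simp
  finally show ?case using finK Suc.IH by (simp add: K_def[symmetric])
qed

context pgr
begin

lemma N_stepk: "x \<in> darts V deg \<Longrightarrow> N x = stepk deg nb x (kv (r (hdd nb x)))"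
  by (auto simp: dnxt_def stepk_def hdd_def darts_def nxtp_def split: prod.splits)

lemma stepk_dom: "x \<in> darts V deg \<Longrightarrow> stepk deg nb x k = Some z \<Longrightarrow> z \<in> darts V deg"
proof -
  assume x: "x \<in> darts V deg" and s: "stepk deg nb x k = Some z"
  obtain v p where vp: "x = (v, p)" "v \<in> V" "p < deg v" using x by (auto simp: darts_def)
  obtain u q where uq: "nb v p = (u, q)" by fastforce
  have "u \<in> V" using nb_ok[OF vp(2,3)] uq by auto
  then show ?thesis using s vp uq by (auto simp: stepk_def darts_def split: if_splits)
qed

lemma hdd_V: "x \<in> darts V deg \<Longrightarrow> hdd nb x \<in> V"
  using nb_ok by (auto simp: hdd_def darts_def)

lemma VK_heads: "x \<in> darts V deg \<Longrightarrow> ks \<in> VK deg nb x f \<Longrightarrow>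
    length ks = f \<and> length (heads deg nb x ks) = f \<and> set (heads deg nb x ks) \<subseteq> V"
proof (induction f arbitrary: x ks)
  case 0 then show ?case by simp
next
  case (Suc f)
  from Suc.prems obtain k ks' z where k: "ks = k # ks'" "stepk deg nb x k = Some z" "ks' \<in> VK deg nb z f"
    by auto
  have z: "z \<in> darts V deg" using stepk_dom Suc.prems k by blast
  show ?case using Suc.IH[OF z k(3)] k hdd_V[OF Suc.prems(1)] by simp
qed

lemma walk_ks:
  assumes "x \<in> darts V deg" "\<forall>j\<in>{1..f}. itr N j x \<noteq> None"
  shows "map (\<lambda>j. kv (r (hdd nb (the (itr N j x))))) [0..<f] \<in> VK deg nb x f \<and>
    heads deg nb x (map (\<lambda>j. kv (r (hdd nb (the (itr N j x))))) [0..<f]) = map (\<lambda>j. hdd nb (the (itr N j x))) [0..<f]"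
  using assms
proof (induction f arbitrary: x)
  case 0 then show ?case by simp
next
  case (Suc f)
  have "itr N 1 x \<noteq> None" using bspec[OF Suc.prems(2), of 1] by simp
  then obtain z where z: "N x = Some z" by (cases "N x") auto
  have zd: "z \<in> darts V deg" using N_dom2 z by blast
  have sh: "\<And>j. itr N (Suc j) x = itr N j z" using z by (simp add: itr_Suc' del: itr.simps)
  have pre: "\<forall>j\<in>{1..f}. itr N j z \<noteq> None" using Suc.prems(2) sh
    by (metis One_nat_def Suc_le_mono atLeastAtMost_iff le_SucI)
  have st: "stepk deg nb x (kv (r (hdd nb x))) = Some z" using N_stepk Suc.prems(1) z by simp
  define tl' where "tl' = map (\<lambda>j. kv (r (hdd nb (the (itr N j z))))) [0..<f]"
  have IH: "tl' \<in> VK deg nb z f" "heads deg nb z tl' = map (\<lambda>j. hdd nb (the (itr N j z))) [0..<f]"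
    using Suc.IH[OF zd pre] tl'_def by auto
  have m: "kv (r (hdd nb x)) # tl' \<in> VK deg nb x (Suc f)" unfolding VK.simps
    by (rule UN_I[of "kv (r (hdd nb x))"]) (use st kv_lt IH in auto)
  show ?case unfolding map_upt_Suc0 sh using m IH st by (simp add: tl'_def)
qed

lemma wk_fail: "wk V deg nb r f s z acc = WFail \<Longrightarrow> \<forall>j\<in>{1..f}. itr N j z \<noteq> None \<and> itr N j z \<noteq> Some s"
proof (induction f arbitrary: z acc)
  case 0 then show ?case by simp
next
  case (Suc f)
  obtain z' where z': "N z = Some z'" "z' \<noteq> s" "wk V deg nb r f s z' ((z, R z) # acc) = WFail"
    using Suc.prems by (auto split: option.splits if_splits)
  have sh: "\<And>j. itr N (Suc j) z = itr N j z'" using z' by (simp add: itr_Suc' del: itr.simps)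
  show ?case
  proof
    fix j assume j: "j \<in> {1..Suc f}"
    show "itr N j z \<noteq> None \<and> itr N j z \<noteq> Some s"
    proof (cases "j = 1")
      case True then show ?thesis using z' by simp
    next
      case False
      then obtain j' where "j = Suc j'" "j' \<in> {1..f}" using j by (cases j) auto
      then show ?thesis using Suc.IH[OF z'(3)] sh by simp
    qed
  qed
qed

lemma bad_distinct:
  assumes x: "x \<in> darts V deg" and b: "\<forall>j\<in>{1..f}. itr N j x \<noteq> None \<and> itr N j x \<noteq> Some x"
  shows "distinct (map (\<lambda>j. hdd nb (the (itr N j x))) [0..<f])"
proof -
  have ex: "\<And>j. j \<le> f \<Longrightarrow> \<exists>a. itr N j x = Some a"
  proof -
    fix j assume "j \<le> f"
    show "\<exists>a. itr N j x = Some a"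
    proof (cases "j = 0")
      case True then show ?thesis by simp
    next
      case False
      then have "j \<in> {1..f}" using \<open>j \<le> f\<close> by simp
      then have "itr N j x \<noteq> None" using b by blast
      then show ?thesis by blast
    qed
  qed
  have neq: "hdd nb (the (itr N i x)) \<noteq> hdd nb (the (itr N j x))" if ij: "i < j" "j < f" for i j
  proof
    assume eq: "hdd nb (the (itr N i x)) = hdd nb (the (itr N j x))"
    obtain a where a: "itr N i x = Some a" using ex[of i] ij by auto
    obtain b' where b': "itr N j x = Some b'" using ex[of j] ij by auto
    obtain a' where a': "itr N (Suc i) x = Some a'" using ex[of "Suc i"] ij by auto
    obtain c' where c': "itr N (Suc j) x = Some c'" using ex[of "Suc j"] ij by auto
    have Na: "N a = Some a'" using a a' by simp
    have Nb: "N b' = Some c'" using b' c' by simp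
    have ad: "a \<in> darts V deg" using itr_dom a x by blast
    have bd: "b' \<in> darts V deg" using itr_dom b' x by blast
    obtain u q1 where u1: "R a = (u, q1)" by fastforce
    obtain u2 q2 where u2: "R b' = (u2, q2)" by fastforce
    have uu: "u2 = u" using eq a b' u1 u2 by (auto simp: hdd_def split: prod.splits)
    define k where "k = kv (r u)"
    have kk: "k < 3" using kv_lt k_def by simp
    have a'': "a' = (u, 3 - q1 - k)" "q1 < 3" "q1 \<noteq> k"
      using Na ad u1 by (auto simp: dnxt_def nxtp_def darts_def k_def split: prod.splits if_splits)
    have c'': "c' = (u, 3 - q2 - k)" "q2 < 3" "q2 \<noteq> k"
      using Nb bd u2 uu by (auto simp: dnxt_def nxtp_def darts_def k_def split: prod.splits if_splits)
    show False
    proof (cases "q1 = q2")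
      case True
      then have "R a = R b'" using u1 u2 uu by simp
      then have "a = b'" using R_inv ad bd by metis
      define d where "d = j - i"
      have d: "j = i + d" "d \<ge> 1" using ij by (auto simp: d_def)
      have "itr N j x = (case itr N d x of None \<Rightarrow> None | Some y \<Rightarrow> itr N i y)"
        using d itr_add[of N d i x] by (simp add: add.commute)
      with b' obtain y where y: "itr N d x = Some y" "itr N i y = Some b'" by (auto split: option.splits)
      then have "y = x" using itr_inj a \<open>a = b'\<close> by metis
      then show False using b y d ij by auto
    next
      case False
      then have "q2 = 3 - q1 - k" using a'' c'' kk by (cases q1; cases q2; cases k) (auto simp: less_Suc_eq numeral_3_eq_3)
      then have "a' = R b'" using a'' u2 uu by simp
      define d where "d = j - Suc i"
      have d: "j = Suc i + d" using ij by (auto simp: d_def)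
      have "itr N j x = (case itr N (Suc i) x of None \<Rightarrow> None | Some y \<Rightarrow> itr N d y)"
        using d itr_add by metis
      then have "itr N d a' = Some b'" using a' b' by simp
      then have "itr N d (R b') = Some (R (R b'))" using \<open>a' = R b'\<close> R_inv bd by simp
      then show False using no_itr_rev R_dom bd by blast
    qed
  qed
  show ?thesis unfolding distinct_conv_nth
    by (auto simp: nth_map) (metis neq linorder_neqE_nat)
qed

lemma bad_sub: assumes x: "x \<in> darts V deg" and b: "r \<in> Bad V deg nb f x"
  shows "\<exists>ks\<in>{ks \<in> VK deg nb x f. distinct (heads deg nb x ks)}. r \<in> Ev deg nb x ks"
proof -
  have b': "\<forall>j\<in>{1..f}. itr N j x \<noteq> None \<and> itr N j x \<noteq> Some x" using b by (simp add: Bad_def)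
  define ks where "ks = map (\<lambda>j. kv (r (hdd nb (the (itr N j x))))) [0..<f]"
  have w: "ks \<in> VK deg nb x f" "heads deg nb x ks = map (\<lambda>j. hdd nb (the (itr N j x))) [0..<f]"
    using walk_ks[OF x] b' ks_def by auto
  have "distinct (heads deg nb x ks)" using w(2) bad_distinct[OF x b'] by simp
  moreover have "r \<in> Ev deg nb x ks" using w(2) by (simp add: Ev_def ks_def)
  ultimately show ?thesis using w(1) by blast
qed

end

lemma len3: "{xs::bool list. length xs = 3} = {[False,False,False],[False,False,True],[False,True,False],[False,True,True],
   [True,False,False],[True,False,True],[True,True,False],[True,True,True]}"
proof (intro set_eqI iffI)
  fix xs :: "bool list" assume "xs \<in> {xs. length xs = 3}"
  then obtain a b c where "xs = [a,b,c]" by (auto simp: length_Suc_conv numeral_3_eq_3)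
  then show "xs \<in> {[False,False,False],[False,False,True],[False,True,False],[False,True,True],
   [True,False,False],[True,False,True],[True,True,False],[True,True,True]}"
    by (cases a; cases b; cases c) auto
qed auto

lemma prob_kv: "measure_pmf.prob (random_strings 3) {s. kv s = k} \<le> 3 / 8"
proof -
  define S :: "bool list set" where "S = {xs. length xs = 3}"
  have fin: "finite S" and ne: "S \<noteq> {}" unfolding S_def len3 by auto
  have cS: "card S = 8" unfolding S_def len3 by simp
  have "card (S \<inter> {s. kv s = k}) \<le> 3"
  proof -
    consider "k = 0" | "k = 1" | "k = 2" | "k \<ge> 3" by linarith
    then show ?thesis
    proof cases
      case 1 then show ?thesis unfolding S_def len3 by (simp add: kv_def)
    next
      case 2 then show ?thesis unfolding S_def len3 by (simp add: kv_def)
    next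
      case 3 then show ?thesis unfolding S_def len3 by (simp add: kv_def)
    next
      case 4
      then have "S \<inter> {s. kv s = k} = {}" using kv_lt by (auto, metis not_less)
      then show ?thesis by simp
    qed
  qed
  then show ?thesis unfolding random_strings_def S_def[symmetric]
    using fin ne cS by (simp add: measure_pmf_of_set divide_right_mono)
qed

abbreviation "RS V \<equiv> Pi_pmf V [] (\<lambda>_. random_strings 3)"

context pgr
begin

lemma prob_Ev:
  assumes x: "x \<in> darts V deg" and ks: "ks \<in> VK deg nb x f" and dist: "distinct (heads deg nb x ks)"
  shows "measure_pmf.prob (RS V) (Ev deg nb x ks) \<le> (3/8) ^ f"
proof -
  define hs where "hs = heads deg nb x ks"
  have hl: "length ks = f" "length hs = f" "set hs \<subseteq> V" using VK_heads[OF x ks] hs_def by auto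
  define B where "B = (\<lambda>u. case map_of (zip hs ks) u of None \<Rightarrow> UNIV | Some k \<Rightarrow> {s. kv s = k})"
  have sub: "Ev deg nb x ks \<subseteq> Pi V B"
  proof
    fix r assume r: "r \<in> Ev deg nb x ks"
    show "r \<in> Pi V B"
    proof
      fix u assume "u \<in> V"
      show "r u \<in> B u"
      proof (cases "map_of (zip hs ks) u")
        case None then show ?thesis by (simp add: B_def)
      next
        case (Some k)
        then have "(u, k) \<in> set (zip hs ks)" by (rule map_of_SomeD)
        then obtain j where j: "j < length hs" "j < length ks" "hs ! j = u" "ks ! j = k"
          by (auto simp: in_set_zip)
        then have "kv (r u) = k" using r hs_def by (auto simp: Ev_def)
        then show ?thesis using Some by (simp add: B_def)
      qed
    qed
  qed
  have "measure_pmf.prob (RS V) (Ev deg nb x ks) \<le> measure_pmf.prob (RS V) (Pi V B)"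
    using sub by (intro measure_pmf.finite_measure_mono) auto
  also have "\<dots> = (\<Prod>u\<in>V. measure_pmf.prob (random_strings 3) (B u))"
    using finV by (rule measure_Pi_pmf_Pi)
  also have "\<dots> \<le> (\<Prod>u\<in>V. (if u \<in> set hs then 3/8 else 1))"
  proof (intro prod_mono conjI)
    fix u assume "u \<in> V"
    show "0 \<le> measure_pmf.prob (random_strings 3) (B u)" by simp
    show "measure_pmf.prob (random_strings 3) (B u) \<le> (if u \<in> set hs then 3/8 else 1)"
    proof (cases "u \<in> set hs")
      case True
      then obtain k where "map_of (zip hs ks) u = Some k"
        using map_of_zip_is_None[of hs ks u] hl by fastforce
      then show ?thesis using True prob_kv by (simp add: B_def)
    next
      case False then show ?thesis by simp
    qed
  qed
  also have "\<dots> = (\<Prod>u \<in> V \<inter> {u. u \<in> set hs}. 3/8) * (\<Prod>u \<in> V \<inter> - {u. u \<in> set hs}. (1::real))"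
    by (rule prod.If_cases[OF finV])
  also have "\<dots> = (3/8) ^ card (V \<inter> {u. u \<in> set hs})" by simp
  also have "card (V \<inter> {u. u \<in> set hs}) = f"
  proof -
    have "V \<inter> {u. u \<in> set hs} = set hs" using hl by auto
    moreover have "card (set hs) = length hs" using distinct_card[of hs] dist hs_def by simp
    ultimately show ?thesis using hl by simp
  qed
  finally show ?thesis .
qed

end

lemma pgr_all: "port_graph V deg nb \<Longrightarrow> pgr V deg nb" by (simp add: pgr_def)

lemma prob_Bad:
  assumes pg: "port_graph V deg nb" and x: "x \<in> darts V deg"
  shows "measure_pmf.prob (RS V) (Bad V deg nb f x) \<le> (3/4) ^ f"
proof -
  define K where "K = {ks \<in> VK deg nb x f. distinct (heads deg nb x ks)}"
  have finK: "finite K" using card_VK[of deg nb x f] by (simp add: K_def)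
  have cK: "card K \<le> 2 ^ f"
    using card_VK[of deg nb x f] card_mono[of "VK deg nb x f" K] by (auto simp: K_def)
  have "Bad V deg nb f x \<subseteq> (\<Union>ks\<in>K. Ev deg nb x ks)"
    using pgr.bad_sub[OF pgr_all[OF pg] x] by (auto simp: K_def)
  then have "measure_pmf.prob (RS V) (Bad V deg nb f x) \<le> measure_pmf.prob (RS V) (\<Union>ks\<in>K. Ev deg nb x ks)"
    by (intro measure_pmf.finite_measure_mono) auto
  also have "\<dots> \<le> (\<Sum>ks\<in>K. measure_pmf.prob (RS V) (Ev deg nb x ks))"
    using finK by (intro measure_pmf.finite_measure_subadditive_finite) auto
  also have "\<dots> \<le> (\<Sum>ks\<in>K. (3/8) ^ f)"
    using pgr.prob_Ev[OF pgr_all[OF pg] x] by (intro sum_mono) (auto simp: K_def)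
  also have "\<dots> = card K * (3/8) ^ f" by simp
  also have "\<dots> \<le> 2 ^ f * (3/8) ^ f"
  proof (rule mult_right_mono)
    have "real (card K) \<le> real (2 ^ f)" using cK by (simp only: of_nat_le_iff)
    then show "real (card K) \<le> 2 ^ f" by simp
  qed simp
  also have "(2::real) ^ f * (3/8) ^ f = (2 * (3/8)) ^ f" by (rule power_mult_distrib[symmetric])
  also have "(2::real) * (3/8) = 3/4" by simp
  finally show ?thesis .
qed

lemma prob_Bad_all:
  assumes pg: "port_graph V deg nb"
  shows "measure_pmf.prob (RS V) (\<Union>x\<in>darts V deg. Bad V deg nb f x) \<le> card (darts V deg) * (3/4) ^ f"
proof -
  have fin: "finite (darts V deg)" using pgr.fin_darts[OF pgr_all[OF pg]] .
  have "measure_pmf.prob (RS V) (\<Union>x\<in>darts V deg. Bad V deg nb f x) \<le> (\<Sum>x\<in>darts V deg. measure_pmf.prob (RS V) (Bad V deg nb f x))"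
    using fin by (intro measure_pmf.finite_measure_subadditive_finite) auto
  also have "\<dots> \<le> (\<Sum>x\<in>darts V deg. (3/4) ^ f)"
    using prob_Bad[OF pg] by (intro sum_mono) auto
  finally show ?thesis by simp
qed

definition blk :: "bool list \<Rightarrow> nat \<Rightarrow> bool list" where
  "blk \<rho> u = take 3 (drop (3 * (u - 1)) \<rho>)"

definition blkV :: "nat \<Rightarrow> bool list \<Rightarrow> nat \<Rightarrow> bool list" where
  "blkV n \<rho> = (\<lambda>u. if u \<in> {1..n} then blk \<rho> u else [])"

lemma Lk_card: "card {xs::bool list. length xs = k} = 2 ^ k" and Lk_fin: "finite {xs::bool list. length xs = k}"
proof -
  have e: "{xs::bool list. length xs = k} = {xs. set xs \<subseteq> UNIV \<and> length xs = k}" by simp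
  show "card {xs::bool list. length xs = k} = 2 ^ k" using card_lists_length_eq[of "UNIV::bool set" k] by simp
  show "finite {xs::bool list. length xs = k}" using finite_lists_length_eq[of "UNIV::bool set" k] by simp
qed

lemma Lk_ne: "{xs::bool list. length xs = k} \<noteq> {}"
proof -
  have "replicate k False \<in> {xs::bool list. length xs = k}" by simp
  then show ?thesis by blast
qed

lemma concat_blk: "length \<rho> = 3 * n \<Longrightarrow> concat (map (blk \<rho>) [1..<Suc n]) = \<rho>"
proof (induction n arbitrary: \<rho>)
  case 0 then show ?case by simp
next
  case (Suc n)
  have up: "[1..<Suc (Suc n)] = 1 # map Suc [1..<Suc n]"
    by (simp add: upt_conv_Cons map_Suc_upt)
  have "map (blk \<rho>) (map Suc [1..<Suc n]) = map (\<lambda>w. blk \<rho> (Suc w)) [1..<Suc n]" by simp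
  also have "\<dots> = map (blk (drop 3 \<rho>)) [1..<Suc n]"
  proof (intro map_cong refl)
    fix w assume "w \<in> set [1..<Suc n]"
    then have w: "w \<ge> 1" by auto
    have "3 * (Suc w - 1) = 3 + 3 * (w - 1)" using w by simp
    then show "blk \<rho> (Suc w) = blk (drop 3 \<rho>) w" by (simp add: blk_def add.commute)
  qed
  finally have m: "map (blk \<rho>) [1..<Suc (Suc n)] = blk \<rho> 1 # map (blk (drop 3 \<rho>)) [1..<Suc n]"
    unfolding up by simp
  have l: "length (drop 3 \<rho>) = 3 * n" using Suc.prems by simp
  have "concat (map (blk \<rho>) [1..<Suc (Suc n)]) = blk \<rho> 1 @ drop 3 \<rho>"
    unfolding m using Suc.IH[OF l] by simp
  also have "\<dots> = \<rho>" by (simp add: blk_def)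
  finally show ?case .
qed

lemma blkV_inj: "inj_on (blkV n) {xs. length xs = 3 * n}"
proof (rule inj_onI)
  fix a b assume a: "a \<in> {xs. length xs = 3 * n}" and b: "b \<in> {xs. length xs = 3 * n}" and e: "blkV n a = blkV n b"
  have "map (blk a) [1..<Suc n] = map (blk b) [1..<Suc n]"
  proof (intro map_cong refl)
    fix u assume "u \<in> set [1..<Suc n]"
    then have "u \<in> {1..n}" by auto
    then show "blk a u = blk b u" using fun_cong[OF e, of u] by (simp add: blkV_def)
  qed
  moreover have "concat (map (blk a) [1..<Suc n]) = a" using concat_blk a by simp
  moreover have "concat (map (blk b) [1..<Suc n]) = b" using concat_blk b by simp
  ultimately show "a = b" by metis
qed

lemma blkV_dist: "map_pmf (blkV n) (random_strings (3 * n)) = RS {1..n}"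
proof -
  define L where "L = {xs::bool list. length xs = 3}"
  define Ln where "Ln = {xs::bool list. length xs = 3 * n}"
  have RS: "RS {1..n} = pmf_of_set (PiE_dflt {1..n} [] (\<lambda>_. L))"
    unfolding random_strings_def L_def by (rule Pi_pmf_of_set) (auto simp: Lk_fin intro: exI[of _ "replicate 3 False"])
  have M: "map_pmf (blkV n) (random_strings (3 * n)) = pmf_of_set (blkV n ` Ln)"
    unfolding random_strings_def Ln_def
    by (rule map_pmf_of_set_inj[OF blkV_inj Lk_ne Lk_fin])
  have sub: "blkV n ` Ln \<subseteq> PiE_dflt {1..n} [] (\<lambda>_. L)"
  proof
    fix f assume "f \<in> blkV n ` Ln"
    then obtain \<rho> where r: "length \<rho> = 3 * n" "f = blkV n \<rho>" by (auto simp: Ln_def)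
    have "length (blk \<rho> u) = 3" if "u \<in> {1..n}" for u
    proof -
      have "3 * (u - 1) + 3 \<le> 3 * n" using that by auto
      then show ?thesis using r by (simp add: blk_def)
    qed
    then show "f \<in> PiE_dflt {1..n} [] (\<lambda>_. L)" using r by (auto simp: PiE_dflt_def blkV_def L_def)
  qed
  have fin: "finite (PiE_dflt {1..n} [] (\<lambda>_. L))" by (intro finite_PiE_dflt) (auto simp: L_def Lk_fin)
  have "card (blkV n ` Ln) = card Ln" using card_image[OF blkV_inj] Ln_def by simp
  also have "\<dots> = 2 ^ (3 * n)" using Lk_card Ln_def by simp
  also have "\<dots> = card (PiE_dflt {1..n} [] (\<lambda>_. L))"
    by (simp add: card_PiE_dflt L_def Lk_card Lk_fin power_mult)
  finally have "blkV n ` Ln = PiE_dflt {1..n} [] (\<lambda>_. L)"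
    using card_subset_eq[OF fin sub] by simp
  then show ?thesis using RS M by simp
qed

lemma log_star_ex: "\<exists>k. ((\<lambda>y. log 2 y) ^^ k) x \<le> 1"
proof -
  have "\<forall>x. x \<le> real N \<longrightarrow> (\<exists>k. ((\<lambda>y. log 2 y) ^^ k) x \<le> 1)" for N
  proof (induction N)
    case 0 then show ?case by (auto intro: exI[of _ 0])
  next
    case (Suc N)
    show ?case
    proof (intro allI impI)
      fix x assume x: "x \<le> real (Suc N)"
      show "\<exists>k. ((\<lambda>y. log 2 y) ^^ k) x \<le> 1"
      proof (cases "x \<le> 1")
        case True then show ?thesis by (intro exI[of _ 0]) simp
      next
        case False
        have "log 2 x \<le> real N"
        proof (cases "x \<le> 2")
          case True
          then have "log 2 x \<le> log 2 2" using False by (intro log_le_cancel_iff[THEN iffD2]) auto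
          then have "log 2 x \<le> 1" by simp
          moreover have "N \<ge> 1" using x True False by (cases N) auto
          ultimately show ?thesis by linarith
        next
          case x2: False
          have "log 2 x \<le> x - 1"
          proof -
            have "log 2 x = ln x / ln 2" by (simp add: log_def)
            moreover have "ln x \<le> (x - 1) * ln 2"
            proof -
              define g :: "real \<Rightarrow> real" where "g = (\<lambda>y. (y - 1) * ln 2 - ln y)"
              have "g 2 \<ge> 0" by (simp add: g_def)
              have mono: "g 2 \<le> g x"
              proof (rule DERIV_nonneg_imp_nondecreasing[of 2 x g])
                show "2 \<le> x" using x2 by simp
                fix t assume t: "2 \<le> t" "t \<le> x"
                have "(g has_real_derivative (ln 2 - 1 / t)) (at t)"
                  unfolding g_def using t by (auto intro!: derivative_eq_intros)
                moreover have "ln 2 - 1 / t \<ge> 0"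
                proof -
                  have "1 / t \<le> 1 / 2" using t by (intro divide_left_mono) auto
                  moreover have "ln (2::real) \<ge> 1 / 2"
                    using ln_ge_iff[of 2 "1/2"] exp_le_cancel_iff
                    by (metis exp_half_le2 field_sum_of_halves le_divide_eq_numeral1(1) less_eq_real_def ln_exp ln_ge_iff zero_less_numeral)
                  ultimately show ?thesis by linarith
                qed
                ultimately show "\<exists>y. (g has_real_derivative y) (at t) \<and> 0 \<le> y" by blast
              qed
              then show ?thesis using \<open>g 2 \<ge> 0\<close> by (simp add: g_def)
            qed
            ultimately show ?thesis by (simp add: divide_le_eq)
          qed
          then show ?thesis using x by simp
        qed
        then obtain k where "((\<lambda>y. log 2 y) ^^ k) (log 2 x) \<le> 1" using Suc.IH by blast
        then have "((\<lambda>y. log 2 y) ^^ Suc k) x \<le> 1" by (simp only: funpow_Suc_right comp_def)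
        then show ?thesis by blast
      qed
    qed
  qed
  moreover obtain N where "x \<le> real N" using real_arch_simple by blast
  ultimately show ?thesis by blast
qed

lemma log_star_ge1: "n \<ge> 2 \<Longrightarrow> log_star (real n) \<ge> 1"
proof -
  assume n: "n \<ge> 2"
  have ex: "\<exists>k. ((\<lambda>y. log 2 y) ^^ k) (real n) \<le> 1" by (rule log_star_ex)
  have "log_star (real n) \<noteq> 0"
  proof
    assume "log_star (real n) = 0"
    then have "((\<lambda>y. log 2 y) ^^ 0) (real n) \<le> 1"
      using LeastI_ex[OF ex] by (simp add: log_star_def)
    then show False using n by simp
  qed
  then show ?thesis by simp
qed

lemma arith_prob:
  fixes c :: real and n \<Delta> :: nat
  assumes c: "c > 0" and n: "n \<ge> 2"
  shows "real n * real \<Delta> * (3/4) ^ (3 * (nat \<lceil>(c + 1) * log 2 (real n)\<rceil> + \<Delta>)) \<le> 1 / real n powr c"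
proof -
  define y where "y = (c + 1) * log 2 (real n)"
  define k where "k = nat \<lceil>y\<rceil>"
  have ln1: "log 2 (real n) \<ge> 1" using n by simp
  have y0: "y \<ge> 0" using c ln1 y_def by simp
  have ky: "real k \<ge> y" using k_def by linarith
  have s1: "(3/4::real) ^ (3 * (k + \<Delta>)) \<le> (1/2) ^ (k + \<Delta>)"
  proof -
    have "(3/4::real) ^ (3 * (k + \<Delta>)) = ((3/4) ^ 3) ^ (k + \<Delta>)" by (rule power_mult)
    also have "\<dots> \<le> (1/2) ^ (k + \<Delta>)" by (intro power_mono) (auto simp: power3_eq_cube)
    finally show ?thesis .
  qed
  have s3: "(1/2::real) ^ k \<le> real n powr (-(c + 1))"
  proof -
    have p: "(2::real) powr (real k) = 2 ^ k" by (rule powr_realpow) simp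
    have "(1/2::real) ^ k = 2 powr (- real k)" unfolding powr_minus_divide p by (simp add: power_one_over)
    also have "\<dots> \<le> 2 powr (- y)" by (rule powr_mono) (use ky in auto)
    also have "- y = log 2 (real n) * (-(c + 1))" by (simp add: y_def algebra_simps)
    also have "(2::real) powr (log 2 (real n) * (-(c + 1))) = (2 powr log 2 (real n)) powr (-(c + 1))"
      by (rule powr_powr[symmetric])
    also have "\<dots> = real n powr (-(c + 1))" using n by simp
    finally show ?thesis .
  qed
  have s4: "real \<Delta> * (1/2) ^ \<Delta> \<le> 1"
  proof -
    have "\<Delta> < 2 ^ \<Delta>" by (rule less_exp)
    then have "real \<Delta> \<le> real (2 ^ \<Delta>)" by (simp only: of_nat_le_iff less_imp_le)
    then have h: "real \<Delta> \<le> 2 ^ \<Delta>" by simp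
    have "real \<Delta> * (1/2) ^ \<Delta> = real \<Delta> / 2 ^ \<Delta>" by (simp add: power_one_over)
    also have "\<dots> \<le> 1" using h by (simp add: divide_le_eq)
    finally show ?thesis .
  qed
  have s5: "real n * real n powr (-(c + 1)) = real n powr (- c)"
  proof -
    have "real n powr (- c) = real n powr (1 + (-(c + 1)))" by simp
    also have "\<dots> = real n powr 1 * real n powr (-(c + 1))" by (rule powr_add)
    also have "real n powr 1 = real n" using n by simp
    finally show ?thesis by simp
  qed
  have "real n * real \<Delta> * (3/4) ^ (3 * (k + \<Delta>)) \<le> real n * real \<Delta> * ((1/2) ^ k * (1/2) ^ \<Delta>)"
  proof (rule mult_left_mono)
    show "(3/4::real) ^ (3 * (k + \<Delta>)) \<le> (1/2) ^ k * (1/2) ^ \<Delta>" using s1 by (simp only: power_add)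
  qed simp
  also have "\<dots> = (real n * (1/2) ^ k) * (real \<Delta> * (1/2) ^ \<Delta>)" by (simp add: algebra_simps)
  also have "\<dots> \<le> (real n * real n powr (-(c + 1))) * 1"
    using s3 s4 by (intro mult_mono mult_left_mono) auto
  also have "\<dots> = 1 / real n powr c" using s5 by (simp add: powr_minus divide_inverse)
  finally show ?thesis by (simp add: k_def y_def)
qed

lemma arith_probes:
  fixes c :: real and n \<Delta> :: nat
  assumes c: "c > 0" and n: "n \<ge> 2"
  shows "real (2 * (3 * (nat \<lceil>(c + 1) * log 2 (real n)\<rceil> + \<Delta>))) \<le>
     (6 * (c + 2 + real \<Delta>)) * log 2 (real n) * real (log_star (real n))"
proof -
  define L where "L = log 2 (real n)"
  have ln1: "L \<ge> 1" using n by (simp add: L_def)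
  have ls: "real (log_star (real n)) \<ge> 1" using log_star_ge1[OF n] by simp
  have "real (nat \<lceil>(c + 1) * L\<rceil>) \<le> (c + 1) * L + 1"
    using c ln1 by (simp add: of_nat_nat)
  then have "real (2 * (3 * (nat \<lceil>(c + 1) * L\<rceil> + \<Delta>))) \<le> 6 * ((c + 1) * L + 1 + real \<Delta>)" by simp
  also have "\<dots> \<le> 6 * (c + 2 + real \<Delta>) * L"
    using ln1 c mult_left_mono[OF ln1, of "real \<Delta>"] mult_left_mono[OF ln1, of "c + 1"] by (simp add: algebra_simps)
  also have "\<dots> \<le> 6 * (c + 2 + real \<Delta>) * L * real (log_star (real n))"
  proof -
    have "0 \<le> 6 * (c + 2 + real \<Delta>) * L" using c ln1 by simp
    from mult_left_mono[OF ls this] show ?thesis by simp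
  qed
  finally show ?thesis by (simp add: L_def)
qed

definition Fn :: "real \<Rightarrow> nat \<Rightarrow> nat \<Rightarrow> nat" where
  "Fn c \<Delta> n = 3 * (nat \<lceil>(c + 1) * log 2 (real n)\<rceil> + \<Delta>)"

lemma sinkless_cong:
  assumes pg: "port_graph V deg nb" and eq: "\<And>v p. v \<in> V \<Longrightarrow> p < deg v \<Longrightarrow> out v p = out' v p"
    and s: "sinkless_orientation V deg nb out'"
  shows "sinkless_orientation V deg nb out"
  unfolding sinkless_orientation_def
proof (intro conjI ballI allI impI)
  fix v p assume v: "v \<in> V" "p < deg v"
  have h: "fst (nb v p) \<in> V" "snd (nb v p) < deg (fst (nb v p))" using pgr.nb_ok[OF pgr_all[OF pg] v] by auto
  show "out v p \<noteq> out (fst (nb v p)) (snd (nb v p))"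
    using s v h eq by (simp add: sinkless_orientation_def)
next
  fix v assume v: "v \<in> V" "3 \<le> deg v"
  from s v obtain p where p: "p < deg v" "out' v p" by (auto simp: sinkless_orientation_def)
  then have "out v p" using eq v by simp
  then show "\<exists>p<deg v. out v p" using p by blast
qed

lemma card_darts:
  assumes pg: "port_graph V deg nb" and md: "max_degree_le V deg \<Delta>"
  shows "card (darts V deg) \<le> card V * \<Delta>"
proof -
  have fin: "finite V" using pg by (simp add: port_graph_def)
  have "darts V deg \<subseteq> V \<times> {..<\<Delta>}" using md by (auto simp: darts_def max_degree_le_def)
  then have "card (darts V deg) \<le> card (V \<times> {..<\<Delta>})" using fin by (intro card_mono) auto
  then show ?thesis by (simp add: card_cartesian_product)
qed

lemma dnxt_eq:
  assumes pg: "port_graph V deg nb" and e: "\<And>u. u \<in> V \<Longrightarrow> r u = r' u"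
  shows "dnxt V deg nb r = dnxt V deg nb r'"
proof
  fix x
  show "dnxt V deg nb r x = dnxt V deg nb r' x"
  proof (cases "fst x \<in> V \<and> snd x < deg (fst x)")
    case True
    then have "fst (nb (fst x) (snd x)) \<in> V" using pgr.nb_ok[OF pgr_all[OF pg]] by blast
    then show ?thesis using True e by (auto simp: dnxt_def split: prod.splits)
  next
    case False then show ?thesis by (auto simp: dnxt_def split: prod.splits)
  qed
qed

context pgr
begin

lemma good_ok:
  assumes "r \<notin> (\<Union>x\<in>darts V deg. Bad V deg nb f x)" "x \<in> darts V deg"
  shows "wk V deg nb r f x x [] \<noteq> WFail"
proof
  assume "wk V deg nb r f x x [] = WFail"
  from wk_fail[OF this] have "r \<in> Bad V deg nb f x" by (simp add: Bad_def)
  then show False using assms by blast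
qed

end

lemma prob_good:
  assumes pg: "port_graph V deg nb" and md: "max_degree_le V deg \<Delta>" and cV: "card V = n"
    and c: "c > 0" and n: "n \<ge> 2"
  shows "measure_pmf.prob (RS V) (UNIV - (\<Union>x\<in>darts V deg. Bad V deg nb (Fn c \<Delta> n) x)) \<ge> 1 - 1 / real n powr c"
proof -
  define U where "U = (\<Union>x\<in>darts V deg. Bad V deg nb (Fn c \<Delta> n) x)"
  have "measure_pmf.prob (RS V) U \<le> card (darts V deg) * (3/4) ^ (Fn c \<Delta> n)"
    unfolding U_def by (rule prob_Bad_all[OF pg])
  also have "\<dots> \<le> real n * real \<Delta> * (3/4) ^ (Fn c \<Delta> n)"
  proof (rule mult_right_mono)
    have "card (darts V deg) \<le> n * \<Delta>" using card_darts[OF pg md] cV by simp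
    then have "real (card (darts V deg)) \<le> real (n * \<Delta>)" by (simp only: of_nat_le_iff)
    then show "real (card (darts V deg)) \<le> real n * real \<Delta>" by simp
  qed simp
  also have "\<dots> \<le> 1 / real n powr c" unfolding Fn_def by (rule arith_prob[OF c n])
  finally have "measure_pmf.prob (RS V) U \<le> 1 / real n powr c" .
  moreover have "measure_pmf.prob (RS V) (UNIV - U) = 1 - measure_pmf.prob (RS V) U"
    using measure_pmf.prob_compl[of U "RS V"] by simp
  ultimately show ?thesis unfolding U_def by linarith
qed

lemma vol_part:
  assumes c: "c > 0"
  shows "vol_complexity_success \<Delta> \<kappa> c (\<lambda>n. (6 * (c + 2 + real \<Delta>)) * log 2 (real n) * real (log_star (real n)))
     (\<lambda>_. 3) (\<lambda>n v s p. algT (\<lambda>i. i) (Fn c \<Delta> n) v p)"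
  unfolding vol_complexity_success_def
proof (intro allI impI conjI)
  fix n V deg nb and r :: "nat \<Rightarrow> bool list" assume n: "2 \<le> n" and h: "V \<subseteq> {1..n ^ \<kappa>} \<and> card V = n \<and> port_graph V deg nb \<and> max_degree_le V deg \<Delta>"
    and len: "\<forall>v\<in>V. length (r v) = 3"
  then have pg: "port_graph V deg nb" by auto
  show "\<forall>v\<in>V. \<forall>p<deg v.
             real (snd (vol_out V deg nb r (\<lambda>n v s p. algT (\<lambda>i. i) (Fn c \<Delta> n) v p) n v p))
             \<le> 6 * (c + 2 + real \<Delta>) * log 2 (real n) * real (log_star (real n))"
  proof (intro allI impI ballI)
    fix v p assume v: "v \<in> V" "p < deg v"
    have "snd (vol_run V deg nb r (algT (\<lambda>i. i) (Fn c \<Delta> n) v p) {v}) \<le> 2 * Fn c \<Delta> n"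
      using pgr.vol_alg[OF pgr_all[OF pg], of v p r "Fn c \<Delta> n"] v by (simp add: darts_def)
    then have "real (snd (vol_run V deg nb r (algT (\<lambda>i. i) (Fn c \<Delta> n) v p) {v})) \<le> real (2 * Fn c \<Delta> n)"
      by (simp only: of_nat_le_iff)
    also have "\<dots> \<le> 6 * (c + 2 + real \<Delta>) * log 2 (real n) * real (log_star (real n))"
      unfolding Fn_def by (rule arith_probes[OF c n])
    finally show "real (snd (vol_out V deg nb r (\<lambda>n v s p. algT (\<lambda>i. i) (Fn c \<Delta> n) v p) n v p))
             \<le> 6 * (c + 2 + real \<Delta>) * log 2 (real n) * real (log_star (real n))"
      by (simp add: vol_out_def)
  qed
next
  fix n V deg nb assume n: "2 \<le> n" and h: "V \<subseteq> {1..n ^ \<kappa>} \<and> card V = n \<and> port_graph V deg nb \<and> max_degree_le V deg \<Delta>"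
  then have pg: "port_graph V deg nb" and md: "max_degree_le V deg \<Delta>" and cV: "card V = n" by auto
  interpret pgr V deg nb by (rule pgr_all[OF pg])
  define U where "U = (\<Union>x\<in>darts V deg. Bad V deg nb (Fn c \<Delta> n) x)"
  have sub: "UNIV - U \<subseteq> {r. sinkless_orientation V deg nb
      (\<lambda>v p. fst (vol_out V deg nb r (\<lambda>n v s p. algT (\<lambda>i. i) (Fn c \<Delta> n) v p) n v p))}"
  proof
    fix r assume r: "r \<in> UNIV - U"
    have "sinkless_orientation V deg nb (\<lambda>v p. Ot V deg nb r (v, p))"
      using pgr.Ot_sinkless[OF pgr_all[OF pg]] .
    moreover have "fst (vol_out V deg nb r (\<lambda>n v s p. algT (\<lambda>i. i) (Fn c \<Delta> n) v p) n v p) = Ot V deg nb r (v, p)"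
      if v: "v \<in> V" "p < deg v" for v p
    proof -
      have x: "(v, p) \<in> darts V deg" using v by (simp add: darts_def)
      have x2: "nb v p \<in> darts V deg" using R_dom[OF x] by simp
      have "wk V deg nb r (Fn c \<Delta> n) (v, p) (v, p) [] \<noteq> WFail"
        using pgr.good_ok[OF pgr_all[OF pg]] r x U_def by blast
      moreover have "wk V deg nb r (Fn c \<Delta> n) (nb v p) (nb v p) [] \<noteq> WFail"
        using pgr.good_ok[OF pgr_all[OF pg]] r x2 U_def by blast
      ultimately show ?thesis using pgr.vol_alg[OF pgr_all[OF pg] x, of r "Fn c \<Delta> n"]
        by (simp add: vol_out_def)
    qed
    ultimately show "r \<in> {r. sinkless_orientation V deg nb
      (\<lambda>v p. fst (vol_out V deg nb r (\<lambda>n v s p. algT (\<lambda>i. i) (Fn c \<Delta> n) v p) n v p))}"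
      using sinkless_cong[OF pg] by auto
  qed
  have "1 - 1 / real n powr c \<le> measure_pmf.prob (RS V) (UNIV - U)"
    unfolding U_def by (rule prob_good[OF pg md cV c n])
  also have "\<dots> \<le> measure_pmf.prob (RS V) {r. sinkless_orientation V deg nb
      (\<lambda>v p. fst (vol_out V deg nb r (\<lambda>n v s p. algT (\<lambda>i. i) (Fn c \<Delta> n) v p) n v p))}"
    using sub by (intro measure_pmf.finite_measure_mono) auto
  finally show "1 - 1 / real n powr c \<le> measure_pmf.prob (Pi_pmf V [] (\<lambda>_. random_strings 3))
     {r. sinkless_orientation V deg nb
      (\<lambda>v p. fst (vol_out V deg nb r (\<lambda>n v s p. algT (\<lambda>i. i) (Fn c \<Delta> n) v p) n v p))}" .
qed

definition gL :: "bool list \<Rightarrow> nat \<times> nat \<times> nat \<Rightarrow> nat \<times> nat \<times> nat \<times> bool list" where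
  "gL \<rho> i = (case i of (y, dy, q) \<Rightarrow> (y, dy, q, blk \<rho> y))"

lemma lca_part:
  assumes c: "c > 0"
  shows "lca_complexity_success \<Delta> c (\<lambda>n. (6 * (c + 2 + real \<Delta>)) * log 2 (real n) * real (log_star (real n)))
     (\<lambda>n. 3 * n) (\<lambda>n \<rho> v p. algT (gL \<rho>) (Fn c \<Delta> n) v p)"
  unfolding lca_complexity_success_def
proof (intro allI impI conjI)
  fix n deg nb and \<rho> :: "bool list" assume n: "2 \<le> n" and h: "port_graph {1..n} deg nb \<and> max_degree_le {1..n} deg \<Delta>"
    and len: "length \<rho> = 3 * n"
  then have pg: "port_graph {1..n} deg nb" by auto
  have g: "\<And>\<rho> y dy q. gL \<rho> (y, dy, q) = (y, dy, q, blk \<rho> y)" by (simp add: gL_def)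
  show "\<forall>v\<in>{1..n}. \<forall>p<deg v.
             real (snd (lca_run {1..n} deg nb (algT (gL \<rho>) (Fn c \<Delta> n) v p)))
             \<le> 6 * (c + 2 + real \<Delta>) * log 2 (real n) * real (log_star (real n))"
  proof (intro allI impI ballI)
    fix v p assume v: "v \<in> {1..n}" "p < deg v"
    have "snd (lca_run {1..n} deg nb (algT (gL \<rho>) (Fn c \<Delta> n) v p)) \<le> 2 * Fn c \<Delta> n"
      using pgr.lca_alg[OF pgr_all[OF pg], of "gL \<rho>" "blk \<rho>" v p "Fn c \<Delta> n"] v g by (simp add: darts_def)
    then have "real (snd (lca_run {1..n} deg nb (algT (gL \<rho>) (Fn c \<Delta> n) v p))) \<le> real (2 * Fn c \<Delta> n)"
      by (simp only: of_nat_le_iff)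
    also have "\<dots> \<le> 6 * (c + 2 + real \<Delta>) * log 2 (real n) * real (log_star (real n))"
      unfolding Fn_def by (rule arith_probes[OF c n])
    finally show "real (snd (lca_run {1..n} deg nb (algT (gL \<rho>) (Fn c \<Delta> n) v p)))
             \<le> 6 * (c + 2 + real \<Delta>) * log 2 (real n) * real (log_star (real n))" .
  qed
next
  fix n deg nb assume n: "2 \<le> n" and h: "port_graph {1..n} deg nb \<and> max_degree_le {1..n} deg \<Delta>"
  then have pg: "port_graph {1..n} deg nb" and md: "max_degree_le {1..n} deg \<Delta>" by auto
  have cV: "card {1..n} = n" by simp
  interpret pgr "{1..n}" deg nb by (rule pgr_all[OF pg])
  have g: "\<And>\<rho> y dy q. gL \<rho> (y, dy, q) = (y, dy, q, blk \<rho> y)" by (simp add: gL_def)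
  define U where "U = (\<Union>x\<in>darts {1..n} deg. Bad {1..n} deg nb (Fn c \<Delta> n) x)"
  define S where "S = {\<rho>. sinkless_orientation {1..n} deg nb
      (\<lambda>v p. fst (lca_run {1..n} deg nb (algT (gL \<rho>) (Fn c \<Delta> n) v p)))}"
  have sub: "blkV n -` (UNIV - U) \<subseteq> S"
  proof
    fix \<rho> assume r: "\<rho> \<in> blkV n -` (UNIV - U)"
    have de: "dnxt {1..n} deg nb (blk \<rho>) = dnxt {1..n} deg nb (blkV n \<rho>)"
      by (rule dnxt_eq[OF pg]) (simp add: blkV_def)
    have BE: "\<And>x. (blk \<rho> \<in> Bad {1..n} deg nb (Fn c \<Delta> n) x) = (blkV n \<rho> \<in> Bad {1..n} deg nb (Fn c \<Delta> n) x)"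
      unfolding Bad_def mem_Collect_eq de by (rule refl)
    have r': "blk \<rho> \<notin> (\<Union>x\<in>darts {1..n} deg. Bad {1..n} deg nb (Fn c \<Delta> n) x)"
      using r BE U_def by auto
    have "sinkless_orientation {1..n} deg nb (\<lambda>v p. Ot {1..n} deg nb (blk \<rho>) (v, p))"
      using pgr.Ot_sinkless[OF pgr_all[OF pg]] .
    moreover have "fst (lca_run {1..n} deg nb (algT (gL \<rho>) (Fn c \<Delta> n) v p)) = Ot {1..n} deg nb (blk \<rho>) (v, p)"
      if v: "v \<in> {1..n}" "p < deg v" for v p
    proof -
      have x: "(v, p) \<in> darts {1..n} deg" using v by (simp add: darts_def)
      have x2: "nb v p \<in> darts {1..n} deg" using R_dom[OF x] by simp
      have "wk {1..n} deg nb (blk \<rho>) (Fn c \<Delta> n) (v, p) (v, p) [] \<noteq> WFail"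
        using pgr.good_ok[OF pgr_all[OF pg] r' x] .
      moreover have "wk {1..n} deg nb (blk \<rho>) (Fn c \<Delta> n) (nb v p) (nb v p) [] \<noteq> WFail"
        using pgr.good_ok[OF pgr_all[OF pg] r' x2] .
      ultimately show ?thesis using pgr.lca_alg[OF pgr_all[OF pg], of "gL \<rho>" "blk \<rho>" v p "Fn c \<Delta> n"] g x by simp
    qed
    ultimately show "\<rho> \<in> S" unfolding S_def using sinkless_cong[OF pg] by auto
  qed
  have "1 - 1 / real n powr c \<le> measure_pmf.prob (RS {1..n}) (UNIV - U)"
    unfolding U_def by (rule prob_good[OF pg md cV c n])
  also have "\<dots> = measure_pmf.prob (map_pmf (blkV n) (random_strings (3 * n))) (UNIV - U)"
    by (simp add: blkV_dist)
  also have "\<dots> = measure_pmf.prob (random_strings (3 * n)) (blkV n -` (UNIV - U))" by simp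
  also have "\<dots> \<le> measure_pmf.prob (random_strings (3 * n)) S"
    using sub by (intro measure_pmf.finite_measure_mono) auto
  finally show "1 - 1 / real n powr c \<le> measure_pmf.prob (random_strings (3 * n))
     {\<rho>. sinkless_orientation {1..n} deg nb
      (\<lambda>v p. fst (lca_run {1..n} deg nb (algT (gL \<rho>) (Fn c \<Delta> n) v p)))}" unfolding S_def .
qed

theorem theorem9:
  shows "(\<forall>\<Delta>::nat. \<forall>c::real. c > 0 \<longrightarrow>
            (\<exists>C::real. \<exists>m A. lca_complexity_success \<Delta> c
                 (\<lambda>n. C * log 2 (real n) * real (log_star (real n))) m A))
       \<and> (\<forall>\<Delta>::nat. \<forall>\<kappa>::nat. \<forall>c::real. \<kappa> \<ge> 1 \<longrightarrow> c > 0 \<longrightarrow>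
            (\<exists>C::real. \<exists>m A. vol_complexity_success \<Delta> \<kappa> c
                 (\<lambda>n. C * log 2 (real n) * real (log_star (real n))) m A))"
  using lca_part vol_part by blast

end
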